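(* Let $N\ge2$ and $m_i\ge2$ for all $i\in\{1,\dots,N\}$. Suppose Assumptions A1 and A2 hold, the game has a (finite) Nash equilibrium $\mathbf x^*$, and for each $i\in\{1,\dots,N\}$ and $k\in\{1,\dots,m_i\}$ the interference graph $\mathcal G_I^i$ and the interference-to-$k$ communication graph $\mathcal G_{C_k}^i$ are undirected and connected. Then for each pair of positive constants $(\Delta,v)$ there exists $\delta^*(\Delta,v)>0$ such that for each $\delta\in(0,\delta^* )$, every solution of the seeking dynamics with $\|\chi(0)\|<\Delta$ satisfies $$\|\chi(t)\|\le\phi(\|\chi(0)\|,\delta t)+v\quad\text{for all }t\ge0,$$ where $\phi$ is a class-$\mathcal{KL}$ function.
   Context: Let $N\ge1$ and $m_i\ge1$ ($i=1,\dots,N$) be integers. Agent $j$ of coalition $i$ ($j\in\{1,\dots,m_i\}$) has action $x_{ij}\in\mathbb R$; $\mathbf x_i=(x_{i1},\dots,x_{im_i})^T$, $\mathbf x=(\mathbf x_1^T,\dots,\mathbf x_N^T)^T\in\mathbb R^{M}$ with $M=\sum_i m_i$, and $\mathbf x_{-i}$ denotes $\mathbf x$ with block $\mathbf x_i$ removed. Agent $j$ of coalition $i$ has a local cost $f_{ij}:\mathbb R^M\to\mathbb R$, and coalition $i$ has cost $f_i=\sum_{j=1}^{m_i}f_{ij}$. A Nash equilibrium is $\mathbf x^*$ with $f_i(\mathbf x_i^*,\mathbf x_{-i}^* )\le f_i(\mathbf x_i,\mathbf x_{-i}^* )$ for all $\mathbf x_i\in\mathbb R^{m_i}$ and all $i$.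 Pseudo-gradient: $\mathcal P(\mathbf x)=((\partial f_1/\partial\mathbf x_1)^T,\dots,(\partial f_N/\partial\mathbf x_N)^T)^T$. Assumption A1: every $f_{ij}$ is $\mathcal C^2$. Assumption A2: $(\mathbf x-\mathbf y)^T(\mathcal P(\mathbf x)-\mathcal P(\mathbf y))>0$ for all distinct $\mathbf x,\mathbf y\in\mathbb R^M$. Interference graph $\mathcal G_I^i$: the undirected graph on vertex set $\{1,\dots,m_i\}$ in which distinct $j,k$ are adjacent iff $f_{ij}$ depends explicitly on $x_{ik}$ or $f_{ik}$ depends explicitly on $x_{ij}$; $\mathcal N_{Ik}^i$ is the neighbor set of $k$ in $\mathcal G_I^i$ and $N_{Ik}^i=|\mathcal N_{Ik}^i|$. In particular $\partial f_{ij}/\partial x_{ik}\equiv0$ whenever $j\notin\mathcal N_{Ik}^i\cup\{k\}$. Communication graph $\mathcal G_C^i$: an undirected weighted graph on $\{1,\dots,m_i\}$ with adjacency matrix $(a_i^{jl})$, $a_i^{jl}=a_i^{lj}\ge0$, $a_i^{jj}=0$. The interference-to-$k$ communication graph $\mathcal G_{C_k}^i$ is the subgraph of $\mathcal G_C^i$ induced on the vertex set $\mathcal N_{Ik}^i\cup\{k\}$ (with inherited weights); its Laplacian is $L_{C_k}^i$ and its number of vertices is $N_{C_k^i}=N_{Ik}^i+1$. Seeking dynamics: fix $\delta>0$ and positive constants $\bar d_{ij}$, set $d_{ij}=\delta\bar d_{ij}$. For all $i,j$: $\dot x_{ij}=-d_{ij}\,g_{ijj}$, and for each $k\in\mathcal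 N_{Ij}^i\cup\{j\}$: $\dot w_{ijk}=-\sum_{l\in\mathcal N_{Ik}^i\cup\{k\}}a_i^{jl}(g_{ijk}-g_{ilk})$, $g_{ijk}=w_{ijk}+\partial f_{ij}(\mathbf x)/\partial x_{ik}$, with initial conditions $w_{ijk}(0)=0$ and $\mathbf x(0)$ arbitrary. Error coordinates: $G_{ik}$ is the vector of $g_{ijk}$ over $j\in\mathcal N_{Ik}^i\cup\{k\}$; $R_{ik}\in\mathbb R^{N_{C_k^i}\times(N_{C_k^i}-1)}$ is any matrix such that $[\mathbf 1_{N_{C_k^i}}/\sqrt{N_{C_k^i}}\ \ R_{ik}]$ is an orthogonal matrix ($\mathbf 1_n$ the all-ones vector); $\bar G_{ik}=R_{ik}^TG_{ik}$. $\bar G=(\bar G_{11}^T,\dots,\bar G_{1m_1}^T,\bar G_{21}^T,\dots,\bar G_{Nm_N}^T)^T$ and $\chi(t)=(\bar G(t)^T,(\mathbf x(t)-\mathbf x^* )^T)^T$. *)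

theory Defs
  imports "HOL-Analysis.Analysis"
begin

text \<open>Agents are indexed by a finite type 'a, coalitions by a finite type 'b;
  c a is the coalition of agent a.  Actions form a vector x in real^'a.\<close>

definition upd :: "real^'a \<Rightarrow> 'a \<Rightarrow> real \<Rightarrow> real^'a" where
  "upd x a t = (\<chi> b. if b = a then t else x $ b)"

definition partial :: "(real^'a \<Rightarrow> real) \<Rightarrow> 'a \<Rightarrow> real^'a \<Rightarrow> real" where
  "partial f a x = deriv (\<lambda>t. f (upd x a t)) (x $ a)"

definition depends_on :: "(real^'a \<Rightarrow> real) \<Rightarrow> 'a \<Rightarrow> bool" where
  "depends_on f a \<longleftrightarrow> (\<exists>x t. f (upd x a t) \<noteq> f x)"

definition C2 :: "(real^'a \<Rightarrow> real) \<Rightarrow> bool" where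
  "C2 f \<longleftrightarrow> (\<exists>D D2.
      (\<forall>x. (f has_derivative blinfun_apply (D x)) (at x)) \<and>
      (\<forall>x. (D has_derivative blinfun_apply (D2 x)) (at x)) \<and>
      continuous_on UNIV D2)"

definition coal_cost :: "('a::finite \<Rightarrow> 'b) \<Rightarrow> ('a \<Rightarrow> real^'a \<Rightarrow> real) \<Rightarrow> 'b \<Rightarrow> real^'a \<Rightarrow> real" where
  "coal_cost c f i x = (\<Sum>a\<in>{a. c a = i}. f a x)"

definition pseudo_gradient :: "('a::finite \<Rightarrow> 'b) \<Rightarrow> ('a \<Rightarrow> real^'a \<Rightarrow> real) \<Rightarrow> real^'a \<Rightarrow> real^'a" where
  "pseudo_gradient c f x = (\<chi> a. partial (coal_cost c f (c a)) a x)"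

definition nash_eq :: "('a::finite \<Rightarrow> 'b) \<Rightarrow> ('a \<Rightarrow> real^'a \<Rightarrow> real) \<Rightarrow> real^'a \<Rightarrow> bool" where
  "nash_eq c f xs \<longleftrightarrow>
     (\<forall>i y. (\<forall>a. c a \<noteq> i \<longrightarrow> y $ a = xs $ a) \<longrightarrow> coal_cost c f i xs \<le> coal_cost c f i y)"

definition strictly_monotone :: "(real^'a \<Rightarrow> real^'a) \<Rightarrow> bool" where
  "strictly_monotone P \<longleftrightarrow> (\<forall>x y. x \<noteq> y \<longrightarrow> (x - y) \<bullet> (P x - P y) > 0)"

definition interferes :: "('a \<Rightarrow> 'b) \<Rightarrow> ('a \<Rightarrow> real^'a \<Rightarrow> real) \<Rightarrow> 'a \<Rightarrow> 'a \<Rightarrow> bool" where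
  "interferes c f j k \<longleftrightarrow> j \<noteq> k \<and> c j = c k \<and> (depends_on (f j) k \<or> depends_on (f k) j)"

text \<open>Vertex set N_Ik union {k} of the interference-to-k communication graph.\<close>
definition cvert :: "('a \<Rightarrow> 'b) \<Rightarrow> ('a \<Rightarrow> real^'a \<Rightarrow> real) \<Rightarrow> 'a \<Rightarrow> 'a set" where
  "cvert c f k = insert k {j. interferes c f j k}"

definition graph_connected :: "'a set \<Rightarrow> ('a \<Rightarrow> 'a \<Rightarrow> bool) \<Rightarrow> bool" where
  "graph_connected V E \<longleftrightarrow> V \<noteq> {} \<and>
     (\<forall>u\<in>V. \<forall>v\<in>V. (\<lambda>x y. x \<in> V \<and> y \<in> V \<and> E x y)\<^sup>*\<^sup>* u v)"

definition gval :: "('a \<Rightarrow> real^'a \<Rightarrow> real) \<Rightarrow> real^'a \<Rightarrow> ('a \<Rightarrow> 'a \<Rightarrow> real) \<Rightarrow> 'a \<Rightarrow> 'a \<Rightarrow> real" where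
  "gval f x w j k = w j k + partial (f j) k x"

definition seeking_solution ::
  "('a::finite \<Rightarrow> 'b) \<Rightarrow> ('a \<Rightarrow> real^'a \<Rightarrow> real) \<Rightarrow> ('a \<Rightarrow> 'a \<Rightarrow> real) \<Rightarrow> ('a \<Rightarrow> real)
   \<Rightarrow> (real \<Rightarrow> real^'a) \<Rightarrow> ('a \<Rightarrow> 'a \<Rightarrow> real \<Rightarrow> real) \<Rightarrow> bool" where
  "seeking_solution c f A d x w \<longleftrightarrow>
     (\<forall>t\<ge>0. (x has_vector_derivative
          (\<chi> j. - d j * gval f (x t) (\<lambda>p q. w p q t) j j)) (at t within {0..})) \<and>
     (\<forall>j k. k \<in> cvert c f j \<longrightarrow>
        w j k 0 = 0 \<and>
        (\<forall>t\<ge>0. (w j k has_real_derivative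
            (- (\<Sum>l\<in>cvert c f k. A j l *
                 (gval f (x t) (\<lambda>p q. w p q t) j k - gval f (x t) (\<lambda>p q. w p q t) l k))))
          (at t within {0..})))"

text \<open>[1/sqrt n * 1, R_k] is an orthogonal matrix, rows indexed by cvert k, the
  columns of R_k indexed by 0..n-2, where n = card (cvert k).\<close>
definition orth_compl :: "('a::finite \<Rightarrow> 'b) \<Rightarrow> ('a \<Rightarrow> real^'a \<Rightarrow> real) \<Rightarrow> ('a \<Rightarrow> 'a \<Rightarrow> nat \<Rightarrow> real) \<Rightarrow> bool" where
  "orth_compl c f R \<longleftrightarrow> (\<forall>k.
     (\<forall>p < card (cvert c f k) - 1. \<forall>q < card (cvert c f k) - 1.
        (\<Sum>j\<in>cvert c f k. R k j p * R k j q) = (if p = q then 1 else 0)) \<and>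
     (\<forall>p < card (cvert c f k) - 1. (\<Sum>j\<in>cvert c f k. R k j p) = 0))"

text \<open>Euclidean norm of chi = (Gbar, x - x*) at a time instant with state (x, w).\<close>
definition chi_norm :: "('a::finite \<Rightarrow> 'b) \<Rightarrow> ('a \<Rightarrow> real^'a \<Rightarrow> real) \<Rightarrow> ('a \<Rightarrow> 'a \<Rightarrow> nat \<Rightarrow> real)
    \<Rightarrow> real^'a \<Rightarrow> real^'a \<Rightarrow> ('a \<Rightarrow> 'a \<Rightarrow> real) \<Rightarrow> real" where
  "chi_norm c f R xs x w = sqrt (
     (\<Sum>k\<in>UNIV. \<Sum>p < card (cvert c f k) - 1.
        (\<Sum>j\<in>cvert c f k. R k j p * gval f x w j k)\<^sup>2) + (norm (x - xs))\<^sup>2)"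

definition classK :: "(real \<Rightarrow> real) \<Rightarrow> bool" where
  "classK \<alpha> \<longleftrightarrow> continuous_on {0..} \<alpha> \<and> strict_mono_on {0..} \<alpha> \<and> \<alpha> 0 = 0"

definition classKL :: "(real \<Rightarrow> real \<Rightarrow> real) \<Rightarrow> bool" where
  "classKL \<phi> \<longleftrightarrow>
     (\<forall>s\<ge>0. classK (\<lambda>r. \<phi> r s)) \<and>
     (\<forall>r\<ge>0. (\<forall>s1 s2. 0 \<le> s1 \<longrightarrow> s1 \<le> s2 \<longrightarrow> \<phi> r s2 \<le> \<phi> r s1) \<and>
             ((\<lambda>s. \<phi> r s) \<longlongrightarrow> 0) at_top)"

end

theory Submission
  imports Defs
begin

lemma upd_eq: "upd x a t = x + (t - x$a) *\<^sub>R axis a 1"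
  unfolding upd_def by (vector axis_def)

lemma upd_deriv:
  assumes D: "\<And>x. (f has_derivative blinfun_apply (D x)) (at x)"
  shows "((\<lambda>t. f (upd x a t)) has_real_derivative blinfun_apply (D (upd x a t)) (axis a 1)) (at t)"
proof -
  have h: "((\<lambda>t. upd x a t) has_derivative (\<lambda>h. h *\<^sub>R axis a 1)) (at t)"
    unfolding upd_eq by (auto intro!: derivative_eq_intros simp: algebra_simps)
  have "((\<lambda>t. f (upd x a t)) has_derivative (\<lambda>h. blinfun_apply (D (upd x a t)) (h *\<^sub>R axis a 1))) (at t)"
    using diff_chain_at[OF h D] by (simp add: o_def)
  then show ?thesis
    unfolding has_field_derivative_def
    by (simp add: blinfun.scaleR_right mult.commute[of _ "blinfun_apply _ _"])
qed

lemma partial_eq: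
  assumes D: "\<And>x. (f has_derivative blinfun_apply (D x)) (at x)"
  shows "partial f a x = blinfun_apply (D x) (axis a 1)"
proof -
  have "upd x a (x$a) = x" unfolding upd_def by (vector)
  then show ?thesis unfolding partial_def using upd_deriv[OF D, of x a "x$a"]
    by (simp add: DERIV_imp_deriv)
qed

lemma parseval:
  fixes V :: "'a::finite set" and R :: "'a \<Rightarrow> nat \<Rightarrow> real" and y :: "'a \<Rightarrow> real"
  assumes orth: "\<forall>p<card V - 1. \<forall>q<card V - 1. (\<Sum>j\<in>V. R j p * R j q) = (if p = q then 1 else 0)"
    and zs: "\<forall>p<card V - 1. (\<Sum>j\<in>V. R j p) = 0" and ne: "V \<noteq> {}"
  shows "(\<Sum>p<card V - 1. (\<Sum>j\<in>V. R j p * y j)\<^sup>2) = (\<Sum>j\<in>V. (y j)\<^sup>2) - (\<Sum>j\<in>V. y j)\<^sup>2 / card V"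
proof -
  define n where "n = card V"
  have n0: "n > 0" using ne by (simp add: n_def card_gt_0_iff)
  define bv where "bv p = (\<chi> j. if j \<in> V then R j p else 0)" for p
  define uv where "uv = (\<chi> j. if j \<in> V then 1 / sqrt n else (0::real))"
  define yv where "yv = (\<chi> j. if j \<in> V then y j else 0)"
  have ip: "(\<chi> j. if j \<in> V then a j else 0) \<bullet> (\<chi> j. if j \<in> V then b j else (0::real)) = (\<Sum>j\<in>V. a j * b j)" for a b
    by (simp add: inner_vec_def if_distrib[of "\<lambda>x. x * _"] sum.If_cases)
  have bb: "bv p \<bullet> bv q = (if p = q then 1 else 0)" if "p < n - 1" "q < n - 1" for p q
    using orth that unfolding bv_def ip n_def by auto
  have ub: "uv \<bullet> bv p = 0" if "p < n - 1" for p
    using zs that unfolding bv_def uv_def ip n_def by (simp add: sum_divide_distrib[symmetric])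
  have uu: "uv \<bullet> uv = 1"
    unfolding uv_def ip using n0 ne by (simp add: n_def power2_eq_square[symmetric] power_divide)
  define B where "B = insert uv (bv ` {..<n-1})"
  have inj: "inj_on bv {..<n-1}"
    by (rule inj_onI) (metis bb lessThan_iff zero_neq_one)
  have unot: "uv \<notin> bv ` {..<n-1}" using ub uu by auto
  have cardB: "card B = n" unfolding B_def using unot inj n0 by (simp add: card_image)
  have finB: "finite B" unfolding B_def by simp
  have norm1: "norm b = 1" if "b \<in> B" for b
    using that bb uu unfolding B_def by (auto simp: norm_eq_sqrt_inner)
  have po: "pairwise orthogonal B"
    unfolding pairwise_def B_def orthogonal_def using bb ub
    by (auto simp: inner_commute)
  have indep: "independent B"
    using pairwise_orthogonal_independent[OF po] norm1 by fastforce
  define d where "d = (\<lambda>j. axis j (1::real)) ` V"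
  define S where "S = {x::real^'a. \<forall>i\<in>Basis. i \<notin> d \<longrightarrow> x \<bullet> i = 0}"
  have dB: "d \<subseteq> Basis" unfolding d_def by (auto simp: Basis_vec_def)
  have cd: "card d = n" unfolding d_def n_def
    by (rule card_image) (auto intro!: inj_onI simp: axis_eq_axis)
  have dimS: "dim S = n" using dim_substandard[OF dB] cd by (simp add: S_def)
  have inS: "(\<chi> j. if j \<in> V then a j else 0) \<in> S" for a
    unfolding S_def d_def by (auto simp: Basis_vec_def inner_axis)
  have BS: "B \<subseteq> S" unfolding B_def bv_def uv_def using inS by auto
  have "S \<subseteq> span B"
    using card_eq_dim[OF BS _ finB] cardB dimS indep by simp
  then have yspan: "yv \<in> span B" unfolding yv_def using inS by auto
  have exp: "(\<Sum>b\<in>B. (yv \<bullet> b) *\<^sub>R b) = yv"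
    by (rule orthonormal_basis_expand[OF po norm1 yspan finB])
  have "yv \<bullet> yv = (\<Sum>b\<in>B. (yv \<bullet> b)\<^sup>2)"
    by (subst (2) exp[symmetric]) (simp add: inner_sum_right power2_eq_square)
  also have "\<dots> = (yv \<bullet> uv)\<^sup>2 + (\<Sum>p<n-1. (yv \<bullet> bv p)\<^sup>2)"
    unfolding B_def using unot finB inj by (simp add: sum.reindex)
  finally have eq: "yv \<bullet> yv = (yv \<bullet> uv)\<^sup>2 + (\<Sum>p<n-1. (yv \<bullet> bv p)\<^sup>2)" .
  have e1: "yv \<bullet> yv = (\<Sum>j\<in>V. (y j)\<^sup>2)" unfolding yv_def ip by (simp add: power2_eq_square)
  have e2: "(yv \<bullet> uv)\<^sup>2 = (\<Sum>j\<in>V. y j)\<^sup>2 / n"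
    unfolding yv_def uv_def ip using n0
    by (simp add: sum_divide_distrib[symmetric] power_divide)
  have e3: "yv \<bullet> bv p = (\<Sum>j\<in>V. R j p * y j)" for p
    unfolding yv_def bv_def ip by (simp add: mult.commute)
  show ?thesis using eq e1 e2 e3 by (simp add: n_def)
qed

lemma sum_dev_zero:
  fixes V :: "'a set" assumes "finite V" "V \<noteq> {}"
  shows "(\<Sum>j\<in>V. y j - (\<Sum>l\<in>V. y l) / card V) = (0::real)"
  using assms by (simp add: sum_subtractf)

lemma mean_min:
  fixes V :: "'a set" and y :: "'a \<Rightarrow> real" assumes "finite V" "V \<noteq> {}"
  shows "(\<Sum>j\<in>V. (y j - (\<Sum>l\<in>V. y l) / card V)\<^sup>2) \<le> (\<Sum>j\<in>V. (y j - c)\<^sup>2)"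
proof -
  define m where "m = (\<Sum>l\<in>V. y l) / card V"
  have z: "(\<Sum>j\<in>V. y j - m) = 0" using sum_dev_zero[OF assms] by (simp add: m_def)
  have "(\<Sum>j\<in>V. (y j - c)\<^sup>2) = (\<Sum>j\<in>V. (y j - m)\<^sup>2 + 2 * (m - c) * (y j - m) + (m - c)\<^sup>2)"
    by (rule sum.cong) (auto simp: power2_eq_square algebra_simps)
  also have "\<dots> = (\<Sum>j\<in>V. (y j - m)\<^sup>2) + 2 * (m - c) * (\<Sum>j\<in>V. y j - m) + card V * (m - c)\<^sup>2"
    by (simp add: sum.distrib sum_distrib_left)
  finally show ?thesis using z by (simp add: m_def)
qed

lemma sq_tri: "((a::real) - b)\<^sup>2 \<le> 2 * (a - c)\<^sup>2 + 2 * (c - b)\<^sup>2"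
proof -
  have "0 \<le> ((a - c) - (c - b))\<^sup>2" by simp
  then show ?thesis by (simp add: power2_eq_square algebra_simps)
qed

definition lapQ :: "'a set \<Rightarrow> ('a \<Rightarrow> 'a \<Rightarrow> real) \<Rightarrow> ('a \<Rightarrow> real) \<Rightarrow> real" where
  "lapQ V A y = (\<Sum>j\<in>V. \<Sum>l\<in>V. A j l * (y j - y l)\<^sup>2)"

lemma lapQ_term:
  assumes "finite V" "\<forall>j\<in>V. \<forall>l\<in>V. A j l \<ge> 0" "u \<in> V" "v \<in> V"
  shows "A u v * (y u - y v)\<^sup>2 \<le> lapQ V A y"
proof -
  have "A u v * (y u - y v)\<^sup>2 \<le> (\<Sum>l\<in>V. A u l * (y u - y l)\<^sup>2)"
    by (rule member_le_sum[where f="\<lambda>l. A u l * (y u - y l)\<^sup>2"]) (use assms in auto)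
  also have "\<dots> \<le> lapQ V A y" unfolding lapQ_def
    by (rule member_le_sum[where f="\<lambda>j. \<Sum>l\<in>V. A j l * (y j - y l)\<^sup>2"])
       (use assms in \<open>auto intro!: sum_nonneg\<close>)
  finally show ?thesis .
qed

lemma path_bound:
  assumes fin: "finite V" and nn: "\<forall>j\<in>V. \<forall>l\<in>V. A j l \<ge> 0"
    and path: "(\<lambda>x y. x \<in> V \<and> y \<in> V \<and> A x y > 0)\<^sup>*\<^sup>* u v"
  shows "\<exists>K\<ge>0. \<forall>y. (y v - y u)\<^sup>2 \<le> K * lapQ V A y"
  using path
proof (induction rule: rtranclp_induct)
  case base then show ?case by auto
next
  case (step w v)
  then obtain K where K: "K \<ge> 0" "\<forall>y. (y w - y u)\<^sup>2 \<le> K * lapQ V A y" by auto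
  have wv: "w \<in> V" "v \<in> V" "A w v > 0" using step by auto
  show ?case
  proof (intro exI[of _ "2 * K + 2 / A w v"] conjI allI)
    show "0 \<le> 2 * K + 2 / A w v" using K wv by auto
    fix y :: "'a \<Rightarrow> real"
    have t: "A w v * (y w - y v)\<^sup>2 \<le> lapQ V A y" by (rule lapQ_term[OF fin nn wv(1,2)])
    have t2: "(y w - y v)\<^sup>2 \<le> lapQ V A y / A w v" using t wv(3) by (simp add: field_simps)
    have "(y v - y u)\<^sup>2 \<le> 2 * (y w - y v)\<^sup>2 + 2 * (y w - y u)\<^sup>2"
      using sq_tri[of "y v" "y u" "y w"] power2_commute[of "y v" "y w"] by linarith
    also have "\<dots> \<le> 2 * (lapQ V A y / A w v) + 2 * (K * lapQ V A y)"
      using t2 K(2) by (intro add_mono) auto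
    also have "\<dots> = (2 * K + 2 / A w v) * lapQ V A y" by (simp add: algebra_simps)
    finally show "(y v - y u)\<^sup>2 \<le> (2 * K + 2 / A w v) * lapQ V A y" .
  qed
qed

lemma lap_bound:
  fixes V :: "'a set" and A :: "'a \<Rightarrow> 'a \<Rightarrow> real"
  assumes fin: "finite V" and conn: "graph_connected V (\<lambda>j l. A j l > 0)"
    and nn: "\<forall>j\<in>V. \<forall>l\<in>V. A j l \<ge> 0"
  shows "\<exists>lam>0. \<forall>y. lam * (\<Sum>j\<in>V. (y j - (\<Sum>l\<in>V. y l) / card V)\<^sup>2) \<le> lapQ V A y"
proof -
  from conn obtain j0 where j0: "j0 \<in> V" unfolding graph_connected_def by auto
  have "\<forall>j\<in>V. \<exists>K\<ge>0. \<forall>y. (y j - y j0)\<^sup>2 \<le> K * lapQ V A y"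
    using conn j0 unfolding graph_connected_def by (auto intro!: path_bound[OF fin nn])
  then obtain K where K: "\<forall>j\<in>V. K j \<ge> 0 \<and> (\<forall>y. (y j - y j0)\<^sup>2 \<le> K j * lapQ V A y)"
    by metis
  define S where "S = (\<Sum>j\<in>V. K j)"
  have S0: "S \<ge> 0" unfolding S_def using K by (auto intro!: sum_nonneg)
  show ?thesis
  proof (intro exI[of _ "1 / (1 + S)"] conjI allI)
    show "0 < 1 / (1 + S)" using S0 by auto
    fix y :: "'a \<Rightarrow> real"
    have Q0: "lapQ V A y \<ge> 0" unfolding lapQ_def using nn by (auto intro!: sum_nonneg)
    have "(\<Sum>j\<in>V. (y j - (\<Sum>l\<in>V. y l) / card V)\<^sup>2) \<le> (\<Sum>j\<in>V. (y j - y j0)\<^sup>2)"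
      by (rule mean_min[OF fin]) (use j0 in auto)
    also have "\<dots> \<le> (\<Sum>j\<in>V. K j * lapQ V A y)" using K by (intro sum_mono) auto
    also have "\<dots> = S * lapQ V A y" by (simp add: S_def sum_distrib_right)
    also have "\<dots> \<le> (1 + S) * lapQ V A y" using Q0 by (simp add: algebra_simps)
    finally show "1 / (1 + S) * (\<Sum>j\<in>V. (y j - (\<Sum>l\<in>V. y l) / card V)\<^sup>2) \<le> lapQ V A y"
      using S0 by (simp add: field_simps)
  qed
qed

lemma deriv_cont_on:
  assumes "\<forall>t\<in>S. (U has_real_derivative U' t) (at t within S)"
  shows "continuous_on S U"
  using assms by (auto simp: continuous_on_eq_continuous_within intro: DERIV_continuous)

lemma der_sub:
  assumes "\<forall>t\<ge>0. (U has_real_derivative U' t) (at t within {0..})" "0 \<le> s" "s \<le> x" "x \<le> t"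
  shows "(U has_real_derivative U' x) (at x within {s..t})"
  using assms by (meson DERIV_subset atLeastAtMost_iff atLeast_iff order_trans subsetI)

lemma barrier:
  fixes U U' :: "real \<Rightarrow> real"
  assumes ab: "a \<le> b"
    and der: "\<forall>t\<in>{a..b}. (U has_real_derivative U' t) (at t within {a..b})"
    and Ua: "U a \<le> m" and mM: "m < M"
    and neg: "\<forall>t\<in>{a..b}. m \<le> U t \<and> U t \<le> M \<longrightarrow> U' t \<le> 0"
  shows "U b \<le> m"
proof (rule ccontr)
  assume "\<not> U b \<le> m"
  then have Ub: "U b > m" by simp
  define l where "l = min (U b) M"
  have ml: "m < l" using Ub mM by (simp add: l_def)
  have cont: "continuous_on {a..b} U" by (rule deriv_cont_on[OF der])
  define B where "B = {a..b} \<inter> U -` {l..}"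
  have Bcl: "closed B" unfolding B_def by (rule continuous_closed_preimage[OF cont]) auto
  have bB: "b \<in> B" using ab by (auto simp: B_def l_def)
  define t2 where "t2 = Inf B"
  have t2B: "t2 \<in> B" unfolding t2_def
    by (rule closed_contains_Inf) (use bB Bcl in \<open>auto simp: B_def bdd_below_def\<close>)
  have t2lo: "\<forall>t\<in>{a..b}. t < t2 \<longrightarrow> U t < l"
  proof (intro ballI impI)
    fix t assume t: "t \<in> {a..b}" "t < t2"
    have "t \<notin> B"
    proof
      assume "t \<in> B"
      then have "t2 \<le> t" unfolding t2_def by (intro cInf_lower) (auto simp: B_def bdd_below_def)
      with t show False by simp
    qed
    then show "U t < l" using t by (auto simp: B_def)
  qed
  have t2ab: "a \<le> t2" "t2 \<le> b" "U t2 \<ge> l" using t2B by (auto simp: B_def)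
  have cont2: "continuous_on {a..t2} U" by (rule continuous_on_subset[OF cont]) (use t2ab in auto)
  define A' where "A' = {a..t2} \<inter> U -` {..m}"
  have Acl: "closed A'" unfolding A'_def by (rule continuous_closed_preimage[OF cont2]) auto
  have aA: "a \<in> A'" using Ua t2ab by (auto simp: A'_def)
  define t0 where "t0 = Sup A'"
  have t0A: "t0 \<in> A'" unfolding t0_def
    by (rule closed_contains_Sup) (use aA Acl in \<open>auto simp: A'_def bdd_above_def\<close>)
  have t0p: "a \<le> t0" "t0 \<le> t2" "U t0 \<le> m" using t0A by (auto simp: A'_def)
  have t02: "t0 < t2" using t0p t2ab ml by (metis order.order_iff_strict not_le order_trans)
  have above: "U t > m" if "t0 < t" "t \<le> t2" for t
  proof (rule ccontr)
    assume "\<not> U t > m"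
    then have "t \<in> A'" using that t0p by (auto simp: A'_def)
    then have "t \<le> t0" unfolding t0_def by (intro cSup_upper) (auto simp: A'_def bdd_above_def)
    with that show False by simp
  qed
  have der2: "\<And>x. t0 \<le> x \<Longrightarrow> x \<le> t2 \<Longrightarrow> (U has_derivative (*) (U' x)) (at x within {t0..t2})"
  proof -
    fix x assume x: "t0 \<le> x" "x \<le> t2"
    then have "x \<in> {a..b}" using t0p t2ab by auto
    with der have "(U has_real_derivative U' x) (at x within {a..b})" by auto
    then have "(U has_real_derivative U' x) (at x within {t0..t2})"
      by (rule DERIV_subset) (use t0p t2ab in auto)
    then show "(U has_derivative (*) (U' x)) (at x within {t0..t2})"
      by (simp add: has_field_derivative_def)
  qed
  obtain x where x: "x \<in> {t0<..<t2}" "U t2 - U t0 = U' x * (t2 - t0)"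
    using mvt_simple[OF t02 der2] by auto
  have "U x > m" using above x(1) by auto
  moreover have "U x < l" using t2lo x(1) t0p t2ab by auto
  ultimately have "U' x \<le> 0" using neg x(1) t0p t2ab l_def by auto
  then have "U' x * (t2 - t0) \<le> 0" using t02 by (simp add: mult_nonpos_nonneg)
  then have "U t2 \<le> U t0" using x by linarith
  then show False using t0p t2ab ml by linarith
qed

lemma decay:
  fixes U U' :: "real \<Rightarrow> real"
  assumes der: "\<forall>t\<ge>0. (U has_real_derivative U' t) (at t within {0..})"
    and bnd: "\<forall>t\<ge>0. U t \<le> M"
    and th: "\<theta> < M" and c: "c \<ge> 0"
    and neg: "\<forall>t\<ge>0. \<theta> \<le> U t \<longrightarrow> U' t \<le> - c"
    and t: "t \<ge> 0"
  shows "U t \<le> max \<theta> (U 0 - c * t)"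
proof (cases "U t \<le> \<theta>")
  case True then show ?thesis by simp
next
  case False
  have allab: "\<forall>s\<in>{0..t}. U s > \<theta>"
  proof
    fix s assume s: "s \<in> {0..t}"
    show "U s > \<theta>"
    proof (rule ccontr)
      assume "\<not> U s > \<theta>"
      have "U t \<le> \<theta>"
      proof (rule barrier[of s t U U' \<theta> M])
        show "s \<le> t" using s by auto
        show "\<forall>x\<in>{s..t}. (U has_real_derivative U' x) (at x within {s..t})"
          using der s by (auto intro: der_sub)
        show "U s \<le> \<theta>" using \<open>\<not> U s > \<theta>\<close> by simp
        show "\<theta> < M" by (rule th)
        show "\<forall>x\<in>{s..t}. \<theta> \<le> U x \<and> U x \<le> M \<longrightarrow> U' x \<le> 0"
        proof (intro ballI impI)
          fix x assume "x \<in> {s..t}" "\<theta> \<le> U x \<and> U x \<le> M"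
          then show "U' x \<le> 0" using neg s c by (metis atLeastAtMost_iff neg_le_0_iff_le order_trans)
        qed
      qed
      with False show False by simp
    qed
  qed
  have "U t - U 0 \<le> - c * t"
  proof (cases "t = 0")
    case True then show ?thesis by simp
  next
    case False
    then have t0: "0 < t" using t by simp
    have der2: "\<And>x. 0 \<le> x \<Longrightarrow> x \<le> t \<Longrightarrow> (U has_derivative (*) (U' x)) (at x within {0..t})"
    proof -
      fix x :: real assume x: "0 \<le> x" "x \<le> t"
      then have "(U has_real_derivative U' x) (at x within {0..t})"
        using der by (auto intro: der_sub)
      then show "(U has_derivative (*) (U' x)) (at x within {0..t})"
        by (simp add: has_field_derivative_def)
    qed
    obtain x where x: "x \<in> {0<..<t}" "U t - U 0 = U' x * (t - 0)"
      using mvt_simple[OF t0 der2] by auto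
    have "U x > \<theta>" using allab x(1) by auto
    then have "U' x \<le> - c" using neg x(1) by auto
    then have "U' x * t \<le> (- c) * t" using t0 by (intro mult_right_mono) auto
    then show ?thesis using x by simp
  qed
  then show ?thesis by simp
qed

definition psi :: "(real \<Rightarrow> real) \<Rightarrow> real \<Rightarrow> real \<Rightarrow> real" where
  "psi \<alpha> r s = Inf ((\<lambda>\<theta>. max \<theta> (r - \<alpha> \<theta> * s)) ` {0<..})"

locale alpha_fun =
  fixes \<alpha> :: "real \<Rightarrow> real"
  assumes amono: "\<And>a b. 0 < a \<Longrightarrow> a \<le> b \<Longrightarrow> \<alpha> a \<le> \<alpha> b"
    and apos: "\<And>a. 0 < a \<Longrightarrow> \<alpha> a > 0"
begin

lemma bdd: "bdd_below ((\<lambda>\<theta>. max \<theta> (r - \<alpha> \<theta> * s)) ` {0<..})"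
  by (rule bdd_belowI[of _ 0]) auto

lemma psi_le: "\<theta> > 0 \<Longrightarrow> psi \<alpha> r s \<le> max \<theta> (r - \<alpha> \<theta> * s)"
  unfolding psi_def by (rule cInf_lower[OF _ bdd]) auto

lemma psi_nonneg: "psi \<alpha> r s \<ge> 0"
  unfolding psi_def by (rule cInf_greatest) auto

lemma psi_lip: "psi \<alpha> r1 s \<le> psi \<alpha> r2 s + \<bar>r1 - r2\<bar>"
proof -
  have "psi \<alpha> r1 s - \<bar>r1 - r2\<bar> \<le> psi \<alpha> r2 s"
    unfolding psi_def
  proof (rule cInf_greatest)
    show "(\<lambda>\<theta>. max \<theta> (r2 - \<alpha> \<theta> * s)) ` {0<..} \<noteq> {}" by auto
    fix x assume "x \<in> (\<lambda>\<theta>. max \<theta> (r2 - \<alpha> \<theta> * s)) ` {0<..}"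
    then obtain \<theta> where th: "\<theta> > 0" "x = max \<theta> (r2 - \<alpha> \<theta> * s)" by auto
    have "Inf ((\<lambda>\<theta>. max \<theta> (r1 - \<alpha> \<theta> * s)) ` {0<..}) \<le> max \<theta> (r1 - \<alpha> \<theta> * s)"
      using psi_le[OF th(1)] by (simp add: psi_def)
    also have "\<dots> \<le> x + \<bar>r1 - r2\<bar>" using th by auto
    finally show "Inf ((\<lambda>\<theta>. max \<theta> (r1 - \<alpha> \<theta> * s)) ` {0<..}) - \<bar>r1 - r2\<bar> \<le> x" by simp
  qed
  then show ?thesis by simp
qed

lemma psi_cont: "continuous_on S (\<lambda>r. psi \<alpha> r s)"
proof -
  have "\<bar>psi \<alpha> r1 s - psi \<alpha> r2 s\<bar> \<le> \<bar>r1 - r2\<bar>" for r1 r2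
    using psi_lip[of r1 s r2] psi_lip[of r2 s r1] by (simp add: abs_minus_commute)
  then show ?thesis
    unfolding continuous_on_iff dist_real_def
    by (metis le_less_trans)
qed

lemma psi_mono_r: "r1 \<le> r2 \<Longrightarrow> psi \<alpha> r1 s \<le> psi \<alpha> r2 s"
  unfolding psi_def
proof (rule cInf_mono)
  show "(\<lambda>\<theta>. max \<theta> (r2 - \<alpha> \<theta> * s)) ` {0<..} \<noteq> {}" by auto
  show "bdd_below ((\<lambda>\<theta>. max \<theta> (r1 - \<alpha> \<theta> * s)) ` {0<..})" by (rule bdd)
  fix b assume r: "r1 \<le> r2" "b \<in> (\<lambda>\<theta>. max \<theta> (r2 - \<alpha> \<theta> * s)) ` {0<..}"
  then obtain \<theta> where th: "\<theta> > 0" "b = max \<theta> (r2 - \<alpha> \<theta> * s)" by auto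
  show "\<exists>a\<in>(\<lambda>\<theta>. max \<theta> (r1 - \<alpha> \<theta> * s)) ` {0<..}. a \<le> b"
    using th r by (intro bexI[of _ "max \<theta> (r1 - \<alpha> \<theta> * s)"]) auto
qed

lemma psi_mono_s: "0 \<le> s1 \<Longrightarrow> s1 \<le> s2 \<Longrightarrow> psi \<alpha> r s2 \<le> psi \<alpha> r s1"
  unfolding psi_def
proof (rule cInf_mono)
  show "(\<lambda>\<theta>. max \<theta> (r - \<alpha> \<theta> * s1)) ` {0<..} \<noteq> {}" by auto
  show "bdd_below ((\<lambda>\<theta>. max \<theta> (r - \<alpha> \<theta> * s2)) ` {0<..})" by (rule bdd)
  fix b assume "0 \<le> s1" "s1 \<le> s2" "b \<in> (\<lambda>\<theta>. max \<theta> (r - \<alpha> \<theta> * s1)) ` {0<..}"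
  then obtain \<theta> where th: "\<theta> > 0" "b = max \<theta> (r - \<alpha> \<theta> * s1)" by auto
  have "\<alpha> \<theta> * s1 \<le> \<alpha> \<theta> * s2" using apos[OF th(1)] \<open>s1 \<le> s2\<close> by simp
  then show "\<exists>a\<in>(\<lambda>\<theta>. max \<theta> (r - \<alpha> \<theta> * s2)) ` {0<..}. a \<le> b"
    using th by (intro bexI[of _ "max \<theta> (r - \<alpha> \<theta> * s2)"]) auto
qed

lemma psi_zero: "s \<ge> 0 \<Longrightarrow> psi \<alpha> 0 s = 0"
proof -
  assume s: "s \<ge> 0"
  have "psi \<alpha> 0 s \<le> \<theta>" if "\<theta> > 0" for \<theta>
  proof -
    have "psi \<alpha> 0 s \<le> max \<theta> (0 - \<alpha> \<theta> * s)" by (rule psi_le[OF that])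
    also have "\<dots> = \<theta>"
    proof -
      have "0 \<le> \<alpha> \<theta> * s" using apos[OF that] s by simp
      then show ?thesis using that by (intro max_absorb1) simp
    qed
    finally show ?thesis .
  qed
  then have "psi \<alpha> 0 s \<le> 0" by (meson dense not_le)
  then show ?thesis using psi_nonneg[of 0 s] by simp
qed

lemma psi_lim: "((\<lambda>s. psi \<alpha> r s) \<longlongrightarrow> 0) at_top"
proof (rule tendstoI)
  fix e :: real assume e: "e > 0"
  have "eventually (\<lambda>s. psi \<alpha> r s \<le> e / 2) at_top"
  proof (rule eventually_at_top_linorderI[of "\<bar>r\<bar> / \<alpha> (e/2)"])
    fix s assume s: "s \<ge> \<bar>r\<bar> / \<alpha> (e/2)"
    have ap: "\<alpha> (e/2) > 0" using apos e by simp
    have "r \<le> \<alpha> (e/2) * s" using s ap by (simp add: field_simps)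
    then have "max (e/2) (r - \<alpha> (e/2) * s) = e/2" using e by simp
    then show "psi \<alpha> r s \<le> e/2" using psi_le[of "e/2" r s] e by simp
  qed
  then show "eventually (\<lambda>s. dist (psi \<alpha> r s) 0 < e) at_top"
    by eventually_elim (use e psi_nonneg in auto)
qed

lemma psi_bound:
  assumes th0: "\<eta> > 0" and s: "s \<ge> 0"
    and H: "\<And>\<theta>. \<theta> \<ge> \<eta> \<Longrightarrow> u \<le> max \<theta> (r - \<alpha> \<theta> * s)"
  shows "u \<le> \<eta> + psi \<alpha> r s"
proof -
  have "u - \<eta> \<le> psi \<alpha> r s" unfolding psi_def
  proof (rule cInf_greatest)
    show "(\<lambda>\<theta>. max \<theta> (r - \<alpha> \<theta> * s)) ` {0<..} \<noteq> {}" by auto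
    fix x assume "x \<in> (\<lambda>\<theta>. max \<theta> (r - \<alpha> \<theta> * s)) ` {0<..}"
    then obtain \<theta> where th: "\<theta> > 0" "x = max \<theta> (r - \<alpha> \<theta> * s)" by auto
    show "u - \<eta> \<le> x"
    proof (cases "\<theta> \<ge> \<eta>")
      case True then show ?thesis using H[OF True] th th0 by auto
    next
      case False
      have "\<alpha> \<theta> \<le> \<alpha> \<eta>" using amono[OF th(1)] False by simp
      then have "\<alpha> \<theta> * s \<le> \<alpha> \<eta> * s" using s by (simp add: mult_right_mono)
      then have "max \<eta> (r - \<alpha> \<eta> * s) \<le> \<eta> + max \<theta> (r - \<alpha> \<theta> * s)"
        using th(1) th0 unfolding max_def by auto
      then show ?thesis using H[of \<eta>] th by auto
    qed
  qed
  then show ?thesis by simp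
qed

definition phiKL :: "real \<Rightarrow> real \<Rightarrow> real \<Rightarrow> real \<Rightarrow> real" where
  "phiKL K L r s = sqrt (K * psi \<alpha> (L * r\<^sup>2) s) + r * exp (- s)"

lemma phiKL_classKL:
  assumes K: "K > 0" and L: "L > 0"
  shows "classKL (phiKL K L)"
  unfolding classKL_def
proof (intro conjI allI impI)
  fix s :: real assume s: "s \<ge> 0"
  show "classK (\<lambda>r. phiKL K L r s)"
    unfolding classK_def
  proof (intro conjI)
    show "continuous_on {0..} (\<lambda>r. phiKL K L r s)"
      unfolding phiKL_def
      by (intro continuous_intros continuous_on_compose2[OF psi_cont[of UNIV s], of _ "\<lambda>r. L * r\<^sup>2", simplified])
    show "strict_mono_on {0..} (\<lambda>r. phiKL K L r s)"
    proof (rule strict_mono_onI)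
      fix r1 r2 :: real assume r: "r1 \<in> {0..}" "r2 \<in> {0..}" "r1 < r2"
      have "L * r1\<^sup>2 \<le> L * r2\<^sup>2" using r L by (intro mult_left_mono power_mono) auto
      then have "psi \<alpha> (L * r1\<^sup>2) s \<le> psi \<alpha> (L * r2\<^sup>2) s" by (rule psi_mono_r)
      then have "K * psi \<alpha> (L * r1\<^sup>2) s \<le> K * psi \<alpha> (L * r2\<^sup>2) s"
        using K by (simp add: mult_left_mono)
      then have "sqrt (K * psi \<alpha> (L * r1\<^sup>2) s) \<le> sqrt (K * psi \<alpha> (L * r2\<^sup>2) s)"
        by (rule real_sqrt_le_mono)
      moreover have "r1 * exp (- s) < r2 * exp (- s)" using r by simp
      ultimately show "phiKL K L r1 s < phiKL K L r2 s" unfolding phiKL_def by linarith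
    qed
    show "phiKL K L 0 s = 0" unfolding phiKL_def using psi_zero[OF s] by simp
  qed
next
  fix r s1 s2 :: real assume r: "r \<ge> 0" and s: "0 \<le> s1" "s1 \<le> s2"
  have "psi \<alpha> (L * r\<^sup>2) s2 \<le> psi \<alpha> (L * r\<^sup>2) s1" by (rule psi_mono_s[OF s])
  then have "sqrt (K * psi \<alpha> (L * r\<^sup>2) s2) \<le> sqrt (K * psi \<alpha> (L * r\<^sup>2) s1)"
    using K by (simp add: mult_left_mono)
  moreover have "r * exp (- s2) \<le> r * exp (- s1)" using r s by (intro mult_left_mono) auto
  ultimately show "phiKL K L r s2 \<le> phiKL K L r s1" unfolding phiKL_def by linarith
next
  fix r :: real assume r: "r \<ge> 0"
  have "((\<lambda>s. sqrt (K * psi \<alpha> (L * r\<^sup>2) s)) \<longlongrightarrow> sqrt (K * 0)) at_top"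
    by (intro tendsto_intros psi_lim)
  moreover have "((\<lambda>s. r * exp (- s)) \<longlongrightarrow> r * 0) at_top"
    by (intro tendsto_intros) (rule filterlim_compose[OF exp_at_bot filterlim_uminus_at_bot_at_top])
  ultimately show "((\<lambda>s. phiKL K L r s) \<longlongrightarrow> 0) at_top"
    unfolding phiKL_def using tendsto_add by fastforce
qed

end

lemma norm_sq_vec: "(norm (x::real^'n))\<^sup>2 = (\<Sum>i\<in>UNIV. (x$i)\<^sup>2)"
  unfolding power2_norm_eq_inner inner_vec_def by (simp add: power2_eq_square)

lemma interferes_sym: "interferes c f j k \<longleftrightarrow> interferes c f k j"
  unfolding interferes_def by auto

lemma cvert_sym: "j \<in> cvert c f k \<longleftrightarrow> k \<in> cvert c f j"
  unfolding cvert_def using interferes_sym by fastforce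

lemma cvert_coal: "j \<in> cvert c f k \<Longrightarrow> c j = c k"
  unfolding cvert_def interferes_def by auto

lemma partial_const:
  assumes "\<not> depends_on g a" shows "partial g a x = 0"
proof -
  have "g (upd x a t) = g x" for t using assms unfolding depends_on_def by auto
  then show ?thesis unfolding partial_def by simp
qed

locale game =
  fixes c :: "'a::finite \<Rightarrow> 'b::finite"
    and f :: "'a \<Rightarrow> real^'a \<Rightarrow> real"
    and A :: "'a \<Rightarrow> 'a \<Rightarrow> real"
    and dbar :: "'a \<Rightarrow> real"
    and xs :: "real^'a"
    and R :: "'a \<Rightarrow> 'a \<Rightarrow> nat \<Rightarrow> real"
  assumes A1: "\<forall>a. C2 (f a)"
    and A2: "strictly_monotone (pseudo_gradient c f)"
    and NE: "nash_eq c f xs"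
    and GC: "\<forall>k. graph_connected (cvert c f k) (\<lambda>j l. A j l > 0)"
    and Asym: "\<forall>j l. c j = c l \<longrightarrow> A j l = A l j"
    and Anonneg: "\<forall>j l. c j = c l \<longrightarrow> A j l \<ge> 0"
    and dpos: "\<forall>a. dbar a > 0"
    and Rorth: "orth_compl c f R"
begin

abbreviation "V k \<equiv> cvert c f k"
abbreviation "n k \<equiv> card (V k)"

definition Df where "Df j = (SOME D. \<exists>D2. (\<forall>x. (f j has_derivative blinfun_apply (D x)) (at x)) \<and>
      (\<forall>x. (D has_derivative blinfun_apply (D2 x)) (at x)) \<and> continuous_on UNIV D2)"
definition D2f where "D2f j = (SOME D2. (\<forall>x. (Df j has_derivative blinfun_apply (D2 x)) (at x)) \<and> continuous_on UNIV D2)"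

lemma Df_prop: "(\<forall>x. (f j has_derivative blinfun_apply (Df j x)) (at x)) \<and>
   (\<exists>D2. (\<forall>x. (Df j has_derivative blinfun_apply (D2 x)) (at x)) \<and> continuous_on UNIV D2)"
  using someI_ex[OF A1[rule_format, of j, unfolded C2_def]] unfolding Df_def by blast

lemma Df: "(f j has_derivative blinfun_apply (Df j x)) (at x)"
  using Df_prop by blast

lemma D2f: "(Df j has_derivative blinfun_apply (D2f j x)) (at x)" and D2f_cont: "continuous_on UNIV (D2f j)"
  using someI_ex[OF conjunct2[OF Df_prop[of j]]] unfolding D2f_def by blast+

lemma Df_cont: "continuous_on UNIV (Df j)"
  using D2f by (meson continuous_on_eq_continuous_within has_derivative_continuous)

lemma partial_f: "partial (f j) k x = blinfun_apply (Df j x) (axis k 1)"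
  by (rule partial_eq[OF Df])

lemma finV: "finite (V k)" by simp
lemma kV: "k \<in> V k" unfolding cvert_def by simp
lemma n_pos: "n k > 0" using kV by (auto simp: card_gt_0_iff)

lemma pg_eq: "pseudo_gradient c f x $ k = (\<Sum>j\<in>V k. partial (f j) k x)"
proof -
  have der: "((\<lambda>t. coal_cost c f (c k) (upd x k t)) has_real_derivative
        (\<Sum>a\<in>{a. c a = c k}. blinfun_apply (Df a (upd x k t)) (axis k 1))) (at t)" for t
    unfolding coal_cost_def by (intro DERIV_sum upd_deriv[OF Df])
  have "partial (coal_cost c f (c k)) k x = (\<Sum>a\<in>{a. c a = c k}. partial (f a) k x)"
  proof -
    have ux: "upd x k (x$k) = x" unfolding upd_def by vector
    show ?thesis unfolding partial_def[of "coal_cost c f (c k)"] partial_f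
      using DERIV_imp_deriv[OF der[of "x$k"]] ux by simp
  qed
  also have "\<dots> = (\<Sum>a\<in>V k. partial (f a) k x)"
  proof (rule sum.mono_neutral_right)
    show "V k \<subseteq> {a. c a = c k}" using cvert_coal by auto
    show "\<forall>i\<in>{a. c a = c k} - V k. partial (f i) k x = 0"
    proof
      fix a assume a: "a \<in> {a. c a = c k} - V k"
      then have "\<not> depends_on (f a) k" unfolding cvert_def interferes_def by auto
      then show "partial (f a) k x = 0" by (rule partial_const)
    qed
  qed simp
  finally show ?thesis unfolding pseudo_gradient_def by simp
qed

lemma coal_der: "((\<lambda>t. coal_cost c f i (upd x k t)) has_real_derivative
      (\<Sum>a\<in>{a. c a = i}. blinfun_apply (Df a (upd x k t)) (axis k 1))) (at t)"
  unfolding coal_cost_def by (intro DERIV_sum upd_deriv[OF Df])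

lemma P_xs: "pseudo_gradient c f xs $ k = 0"
proof -
  have ux: "upd xs k (xs$k) = xs" unfolding upd_def by vector
  have d: "((\<lambda>t. coal_cost c f (c k) (upd xs k t)) has_real_derivative
      pseudo_gradient c f xs $ k) (at (xs$k))"
  proof -
    have "partial (coal_cost c f (c k)) k xs = (\<Sum>a\<in>{a. c a = c k}. blinfun_apply (Df a xs) (axis k 1))"
      unfolding partial_def[of "coal_cost c f (c k)"] using DERIV_imp_deriv[OF coal_der[of "c k" xs k "xs$k"]] ux by simp
    then show ?thesis using coal_der[of "c k" xs k "xs$k"] ux unfolding pseudo_gradient_def by simp
  qed
  have "\<forall>y. \<bar>xs$k - y\<bar> < 1 \<longrightarrow> coal_cost c f (c k) (upd xs k (xs$k)) \<le> coal_cost c f (c k) (upd xs k y)"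
  proof (intro allI impI)
    fix y :: real
    have "\<forall>a. c a \<noteq> c k \<longrightarrow> upd xs k y $ a = xs $ a" unfolding upd_def by auto
    then show "coal_cost c f (c k) (upd xs k (xs$k)) \<le> coal_cost c f (c k) (upd xs k y)"
      using NE unfolding nash_eq_def ux by blast
  qed
  then show ?thesis using DERIV_local_min[OF d, of 1] by simp
qed

definition Pg where "Pg y = pseudo_gradient c f y"
definition rho where "rho y = (y - xs) \<bullet> (Pg y - Pg xs)"

lemma Pg_xs: "Pg xs = 0" unfolding Pg_def using P_xs by (simp add: vec_eq_iff)

lemma rho_nonneg: "rho y \<ge> 0"
  using A2 unfolding rho_def strictly_monotone_def Pg_def
  by (cases "y = xs") (auto intro: less_imp_le)

lemma rho_pos: "y \<noteq> xs \<Longrightarrow> rho y > 0"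
  using A2 unfolding rho_def strictly_monotone_def Pg_def by auto

lemma mono_Pg: "(y - z) \<bullet> (Pg y - Pg z) \<ge> 0"
  using A2 unfolding strictly_monotone_def Pg_def
  by (cases "y = z") (auto intro: less_imp_le)

lemma rho_radial:
  assumes t: "0 < t" "t \<le> 1"
  shows "rho (xs + t *\<^sub>R (y - xs)) \<le> rho y"
proof -
  define u where "u = y - xs"
  define z where "z = xs + t *\<^sub>R u"
  have rz: "rho z = t * (u \<bullet> (Pg z - Pg xs))" unfolding rho_def z_def by simp
  have a: "u \<bullet> (Pg z - Pg xs) \<ge> 0"
    using rho_nonneg[of z] rz t by (simp add: zero_le_mult_iff)
  have b: "u \<bullet> (Pg y - Pg z) \<ge> 0"
  proof (cases "t = 1")
    case True then show ?thesis by (simp add: z_def u_def)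
  next
    case False
    have "y - z = (1 - t) *\<^sub>R u" unfolding z_def u_def by (simp add: algebra_simps)
    then have "(1 - t) * (u \<bullet> (Pg y - Pg z)) \<ge> 0" using mono_Pg[of y z] by simp
    then show ?thesis using t False by (simp add: zero_le_mult_iff)
  qed
  have "rho y = u \<bullet> (Pg y - Pg z) + u \<bullet> (Pg z - Pg xs)"
    unfolding rho_def u_def by (simp add: inner_diff_right)
  moreover have "t * (u \<bullet> (Pg z - Pg xs)) \<le> u \<bullet> (Pg z - Pg xs)"
    using a t by (simp add: mult_left_le_one_le)
  ultimately have "rho z \<le> rho y" using rz b by linarith
  then show ?thesis unfolding z_def u_def .
qed

lemma Pg_comp: "Pg y $ k = (\<Sum>j\<in>V k. blinfun_apply (Df j y) (axis k 1))"
  unfolding Pg_def pg_eq partial_f ..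

lemma rho_eq: "rho y = (\<Sum>k\<in>UNIV. (y$k - xs$k) * (Pg y $ k - Pg xs $ k))"
  unfolding rho_def inner_vec_def by simp

lemma Df_apply_cont: "continuous_on UNIV (\<lambda>y. blinfun_apply (Df j y) v)"
  by (rule blinfun.continuous_on[OF Df_cont continuous_on_const])
   
lemma rho_cont: "continuous_on S rho"
proof -
  have "continuous_on UNIV rho" unfolding rho_eq Pg_comp
    by (intro continuous_on_sum continuous_on_mult continuous_on_diff continuous_on_const
        continuous_on_component Df_apply_cont continuous_on_id)
  then show ?thesis by (rule continuous_on_subset) auto
qed

definition om where "om k = real (n k) / dbar k"
definition Wf where "Wf y = (\<Sum>k\<in>UNIV. om k * (y$k - xs$k)\<^sup>2)"
definition ommin where "ommin = Min (range om)"
definition ommax where "ommax = Max (range om)"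

lemma om_pos: "om k > 0" unfolding om_def using n_pos dpos by simp
lemma ommin_pos: "ommin > 0" unfolding ommin_def using om_pos by simp
lemma ommin_le: "ommin \<le> om k" unfolding ommin_def by simp
lemma ommax_ge: "om k \<le> ommax" unfolding ommax_def by simp

lemma Wf_lower: "ommin * (norm (y - xs))\<^sup>2 \<le> Wf y"
  unfolding Wf_def norm_sq_vec sum_distrib_left
  by (intro sum_mono) (simp add: mult_right_mono ommin_le)

lemma Wf_upper: "Wf y \<le> ommax * (norm (y - xs))\<^sup>2"
  unfolding Wf_def norm_sq_vec sum_distrib_left
  by (intro sum_mono) (simp add: mult_right_mono ommax_ge)

lemma Wf_nonneg: "Wf y \<ge> 0" unfolding Wf_def by (intro sum_nonneg) (simp add: less_imp_le om_pos)

lemma Wf_cont: "continuous_on S Wf"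
  unfolding Wf_def by (intro continuous_intros)

lemma Wf_scale: "Wf (xs + t *\<^sub>R (y - xs)) = t\<^sup>2 * Wf y"
  unfolding Wf_def sum_distrib_left
  by (rule sum.cong) (simp_all add: power2_eq_square algebra_simps)

lemma Wf_exists: assumes "q \<ge> 0" shows "\<exists>y. Wf y = q"
proof -
  fix k0 :: 'a
  define y where "y = xs + sqrt (q / om k0) *\<^sub>R axis k0 1"
  have "Wf y = (\<Sum>k\<in>UNIV. if k = k0 then om k0 * (sqrt (q / om k0))\<^sup>2 else 0)"
    unfolding Wf_def y_def by (rule sum.cong) (auto simp: axis_def)
  also have "\<dots> = q" using assms om_pos[of k0] by simp
  finally show ?thesis by blast
qed

lemma rho_lower:
  assumes q: "q > 0"
  shows "\<exists>m>0. \<forall>y. q \<le> Wf y \<longrightarrow> m \<le> rho y"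
proof -
  define Sq where "Sq = {y. Wf y = q}"
  have bnd: "bounded Sq"
  proof -
    have "Sq \<subseteq> cball xs (sqrt (q / ommin))"
    proof
      fix y assume "y \<in> Sq"
      then have "ommin * (norm (y - xs))\<^sup>2 \<le> q" using Wf_lower[of y] by (simp add: Sq_def)
      then have "(norm (y - xs))\<^sup>2 \<le> q / ommin" using ommin_pos by (simp add: field_simps)
      then have "norm (y - xs) \<le> sqrt (q / ommin)" by (simp add: real_le_rsqrt)
      then show "y \<in> cball xs (sqrt (q / ommin))" by (simp add: dist_norm norm_minus_commute)
    qed
    then show ?thesis using bounded_cball bounded_subset by blast
  qed
  have cl: "closed Sq" unfolding Sq_def
    by (rule closed_Collect_eq) (auto intro: Wf_cont continuous_intros)
  have cpt: "compact Sq" using bnd cl by (simp add: compact_eq_bounded_closed)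
  have ne: "Sq \<noteq> {}" using Wf_exists[of q] q by (auto simp: Sq_def)
  obtain y1 where y1: "y1 \<in> Sq" "\<forall>y\<in>Sq. rho y1 \<le> rho y"
    using continuous_attains_inf[OF cpt ne rho_cont] by blast
  have "y1 \<noteq> xs" using y1 q by (auto simp: Sq_def Wf_def)
  then have m: "rho y1 > 0" by (rule rho_pos)
  show ?thesis
  proof (intro exI[of _ "rho y1"] conjI allI impI m)
    fix y assume y: "q \<le> Wf y"
    define t where "t = sqrt (q / Wf y)"
    have Wp: "Wf y > 0" using y q by simp
    have t: "0 < t" "t \<le> 1" unfolding t_def using Wp q y by (auto simp: real_sqrt_le_1_iff)
    have "Wf (xs + t *\<^sub>R (y - xs)) = q" unfolding Wf_scale t_def using Wp q by simp
    then have "rho y1 \<le> rho (xs + t *\<^sub>R (y - xs))" using y1 by (simp add: Sq_def)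
    also have "\<dots> \<le> rho y" by (rule rho_radial[OF t])
    finally show "rho y1 \<le> rho y" .
  qed
qed

definition rhot where "rhot q = Inf (rho ` {y. q \<le> Wf y})"

lemma rhot_le: "q \<le> Wf y \<Longrightarrow> rhot q \<le> rho y"
  unfolding rhot_def by (rule cInf_lower) (auto intro!: bdd_belowI[of _ 0] rho_nonneg)

lemma rhot_pos: "q > 0 \<Longrightarrow> rhot q > 0"
proof -
  assume q: "q > 0"
  obtain m where m: "m > 0" "\<forall>y. q \<le> Wf y \<longrightarrow> m \<le> rho y" using rho_lower[OF q] by blast
  obtain y0 where "Wf y0 = q" using Wf_exists[of q] q by auto
  then have "m \<le> rhot q" unfolding rhot_def using m by (intro cInf_greatest) auto
  then show ?thesis using m by simp
qed

lemma rhot_mono: "0 < q1 \<Longrightarrow> q1 \<le> q2 \<Longrightarrow> rhot q1 \<le> rhot q2"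
proof -
  assume q: "0 < q1" "q1 \<le> q2"
  obtain y0 where "Wf y0 = q2" using Wf_exists[of q2] q by auto
  then show ?thesis unfolding rhot_def using q
    by (intro cInf_superset_mono) (auto intro!: bdd_belowI[of _ 0] rho_nonneg)
qed

lemma lam_ex: "\<exists>lam>0. \<forall>k y. lam * (\<Sum>j\<in>V k. (y j - (\<Sum>l\<in>V k. y l) / n k)\<^sup>2) \<le> lapQ (V k) A y"
proof -
  have "\<forall>k. \<exists>lam>0. \<forall>y. lam * (\<Sum>j\<in>V k. (y j - (\<Sum>l\<in>V k. y l) / n k)\<^sup>2) \<le> lapQ (V k) A y"
  proof
    fix k
    have nn: "\<forall>j\<in>V k. \<forall>l\<in>V k. A j l \<ge> 0" using Anonneg cvert_coal by metis
    show "\<exists>lam>0. \<forall>y. lam * (\<Sum>j\<in>V k. (y j - (\<Sum>l\<in>V k. y l) / n k)\<^sup>2) \<le> lapQ (V k) A y"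
      by (rule lap_bound[OF finV GC[rule_format] nn])
  qed
  then obtain L where L: "\<forall>k. L k > 0 \<and> (\<forall>y. L k * (\<Sum>j\<in>V k. (y j - (\<Sum>l\<in>V k. y l) / n k)\<^sup>2) \<le> lapQ (V k) A y)"
    by metis
  define lam where "lam = Min (range L)"
  have lp: "lam > 0" unfolding lam_def using L by simp
  have "lam * (\<Sum>j\<in>V k. (y j - (\<Sum>l\<in>V k. y l) / n k)\<^sup>2) \<le> lapQ (V k) A y" for k y
  proof -
    have "lam \<le> L k" unfolding lam_def by simp
    then have "lam * (\<Sum>j\<in>V k. (y j - (\<Sum>l\<in>V k. y l) / n k)\<^sup>2) \<le> L k * (\<Sum>j\<in>V k. (y j - (\<Sum>l\<in>V k. y l) / n k)\<^sup>2)"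
      by (intro mult_right_mono sum_nonneg) auto
    then show ?thesis using L by (meson order_trans)
  qed
  then show ?thesis using lp by blast
qed

end

lemma lap_ident:
  fixes V :: "'a set" and A :: "'a \<Rightarrow> 'a \<Rightarrow> real"
  assumes fin: "finite V" and sym: "\<forall>j\<in>V. \<forall>l\<in>V. A j l = A l j"
  shows "2 * (\<Sum>j\<in>V. (y j - m) * (\<Sum>l\<in>V. A j l * (y j - y l))) = lapQ V A y"
proof -
  define X where "X = (\<Sum>j\<in>V. \<Sum>l\<in>V. A j l * (y j - y l))"
  have "X = (\<Sum>l\<in>V. \<Sum>j\<in>V. A j l * (y j - y l))" unfolding X_def by (rule sum.swap)
  also have "\<dots> = (\<Sum>l\<in>V. \<Sum>j\<in>V. - (A l j * (y l - y j)))"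
    using sym by (intro sum.cong refl) (auto simp: algebra_simps)
  also have "\<dots> = - X" unfolding X_def by (simp add: sum_negf)
  finally have X0: "X = 0" by simp
  define Y where "Y = (\<Sum>j\<in>V. \<Sum>l\<in>V. A j l * (y j - y l) * y j)"
  have "Y = (\<Sum>l\<in>V. \<Sum>j\<in>V. A j l * (y j - y l) * y j)" unfolding Y_def by (rule sum.swap)
  also have "\<dots> = (\<Sum>l\<in>V. \<Sum>j\<in>V. - (A l j * (y l - y j) * y j))"
    using sym by (intro sum.cong refl) (auto simp: algebra_simps)
  finally have Y2: "Y = - (\<Sum>j\<in>V. \<Sum>l\<in>V. A j l * (y j - y l) * y l)" by (simp add: sum_negf)
  have "lapQ V A y = (\<Sum>j\<in>V. \<Sum>l\<in>V. A j l * (y j - y l) * y j - A j l * (y j - y l) * y l)"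
    unfolding lapQ_def by (intro sum.cong refl) (simp add: power2_eq_square algebra_simps)
  also have "\<dots> = Y - (\<Sum>j\<in>V. \<Sum>l\<in>V. A j l * (y j - y l) * y l)"
    unfolding Y_def by (simp add: sum_subtractf)
  also have "\<dots> = 2 * Y" using Y2 by simp
  finally have Q: "lapQ V A y = 2 * Y" .
  have "(\<Sum>j\<in>V. (y j - m) * (\<Sum>l\<in>V. A j l * (y j - y l))) =
      (\<Sum>j\<in>V. (\<Sum>l\<in>V. A j l * (y j - y l) * y j) - m * (\<Sum>l\<in>V. A j l * (y j - y l)))"
    by (intro sum.cong refl) (simp only: sum_distrib_right[symmetric], simp add: algebra_simps)
  also have "\<dots> = Y - m * X"
    unfolding X_def Y_def by (simp add: sum_subtractf sum_distrib_left)
  finally have "(\<Sum>j\<in>V. (y j - m) * (\<Sum>l\<in>V. A j l * (y j - y l))) = Y - m * X" .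
  then show ?thesis using Q X0 by simp
qed

lemma young: "2 * (a::real) * b \<le> e * a\<^sup>2 + b\<^sup>2 / e" if "e > 0"
proof -
  have "0 \<le> (e * a - b)\<^sup>2 / e" using that by simp
  also have "(e * a - b)\<^sup>2 / e = e * a\<^sup>2 - 2 * a * b + b\<^sup>2 / e"
    using that by (simp add: power2_eq_square field_simps)
  finally show ?thesis by simp
qed

context game begin

definition lam where "lam = (SOME lam. lam > 0 \<and> (\<forall>k y. lam * (\<Sum>j\<in>V k. (y j - (\<Sum>l\<in>V k. y l) / n k)\<^sup>2) \<le> lapQ (V k) A y))"

lemma lam: "lam > 0" "lam * (\<Sum>j\<in>V k. (y j - (\<Sum>l\<in>V k. y l) / n k)\<^sup>2) \<le> lapQ (V k) A y"
  using someI_ex[OF lam_ex] unfolding lam_def by blast+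

definition "mS gv k = (\<Sum>l\<in>V k. gv l k) / n k"
definition "ES gv = (\<Sum>k\<in>UNIV. \<Sum>j\<in>V k. (gv j k - mS gv k)\<^sup>2)"
definition "xdS \<delta> gv = (\<chi> j. - (\<delta> * dbar j) * gv j j)"
definition "hS xv \<delta> gv j k = blinfun_apply (blinfun_apply (D2f j xv) (xdS \<delta> gv)) (axis k 1)"
definition "gdS xv \<delta> gv j k = - (\<Sum>l\<in>V k. A j l * (gv j k - gv l k)) + hS xv \<delta> gv j k"
definition "UdS xv \<delta> gv = (\<Sum>k\<in>UNIV. 2 * (\<Sum>j\<in>V k. (gv j k - mS gv k) * gdS xv \<delta> gv j k))
    + (\<Sum>k\<in>UNIV. 2 * om k * (xv$k - xs$k) * (xdS \<delta> gv $ k))"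
definition "invS xv gv \<longleftrightarrow> (\<forall>k. (\<Sum>j\<in>V k. gv j k) = Pg xv $ k)"

lemma ES_nonneg: "ES gv \<ge> 0" unfolding ES_def by (intro sum_nonneg) auto

lemma Wf_cball: "Wf xv \<le> Rr \<Longrightarrow> xv \<in> cball xs (sqrt (max Rr 0 / ommin))"
proof -
  assume "Wf xv \<le> Rr"
  then have "ommin * (norm (xv - xs))\<^sup>2 \<le> max Rr 0" using Wf_lower[of xv] by simp
  then have "(norm (xv - xs))\<^sup>2 \<le> max Rr 0 / ommin" using ommin_pos by (simp add: field_simps)
  then have "norm (xv - xs) \<le> sqrt (max Rr 0 / ommin)" by (rule real_le_rsqrt)
  then show ?thesis by (simp add: dist_norm norm_minus_commute)
qed

lemma Pg_comp_cont: "continuous_on S (\<lambda>y. Pg y $ k)"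
  unfolding Pg_comp
  by (intro continuous_on_sum Df_apply_cont[THEN continuous_on_subset]) auto

lemma bounds: "\<exists>M. M \<ge> 0 \<and> (\<forall>xv. Wf xv \<le> Rr \<longrightarrow> (\<forall>j. norm (D2f j xv) \<le> M) \<and> (\<forall>j. \<bar>Pg xv $ j\<bar> \<le> M))"
proof -
  define K where "K = cball xs (sqrt (max Rr 0 / ommin))"
  define F where "F xv = (\<Sum>j\<in>UNIV. norm (D2f j xv)) + (\<Sum>j\<in>UNIV. \<bar>Pg xv $ j\<bar>)" for xv
  have cF: "continuous_on K F" unfolding F_def
    by (intro continuous_intros continuous_on_norm D2f_cont[THEN continuous_on_subset] Pg_comp_cont) auto
  have "max Rr 0 / ommin \<ge> 0" using ommin_pos by simp
  then have ne: "K \<noteq> {}" unfolding K_def by (simp add: not_less)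
  obtain x0 where x0: "x0 \<in> K" "\<forall>y\<in>K. F y \<le> F x0"
  proof -
    have "compact K" unfolding K_def by simp
    from continuous_attains_sup[OF this ne cF] show ?thesis using that by blast
  qed
  show ?thesis
  proof (intro exI[of _ "F x0"] conjI allI impI)
    show "0 \<le> F x0" unfolding F_def by (intro add_nonneg_nonneg sum_nonneg) auto
    fix xv j assume W: "Wf xv \<le> Rr"
    then have xK: "xv \<in> K" unfolding K_def by (rule Wf_cball)
    have "norm (D2f j xv) \<le> (\<Sum>j\<in>UNIV. norm (D2f j xv))" by (rule member_le_sum) auto
    also have "\<dots> \<le> F xv" unfolding F_def by (simp add: sum_nonneg)
    also have "\<dots> \<le> F x0" using x0 xK by auto
    finally show "norm (D2f j xv) \<le> F x0" .
    have "\<bar>Pg xv $ j\<bar> \<le> (\<Sum>j\<in>UNIV. \<bar>Pg xv $ j\<bar>)" by (rule member_le_sum) auto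
    also have "\<dots> \<le> F xv" unfolding F_def by (simp add: sum_nonneg)
    also have "\<dots> \<le> F x0" using x0 xK by auto
    finally show "\<bar>Pg xv $ j\<bar> \<le> F x0" .
  qed
qed

definition "dmax = Max (range dbar)"

lemma dmax: "dbar j \<le> dmax" unfolding dmax_def by simp
lemma dbar_pos: "dbar j > 0" using dpos by simp
lemma n_le: "real (n k) \<le> (real CARD('a))" by (simp add: card_mono)

lemma sym_V: "\<forall>j\<in>V k. \<forall>l\<in>V k. A j l = A l j"
  using Asym cvert_coal by metis

lemma T12: "(\<Sum>k\<in>UNIV. 2 * (\<Sum>j\<in>V k. (gv j k - mS gv k) * gdS xv \<delta> gv j k))
   \<le> - lam * ES gv + lam / 2 * ES gv + (2 / lam) * (\<Sum>k\<in>UNIV. \<Sum>j\<in>V k. (hS xv \<delta> gv j k)\<^sup>2)"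
proof -
  have "2 * (\<Sum>j\<in>V k. (gv j k - mS gv k) * gdS xv \<delta> gv j k)
     \<le> - lam * (\<Sum>j\<in>V k. (gv j k - mS gv k)\<^sup>2) + (lam / 2 * (\<Sum>j\<in>V k. (gv j k - mS gv k)\<^sup>2)
        + (2 / lam) * (\<Sum>j\<in>V k. (hS xv \<delta> gv j k)\<^sup>2))" for k
  proof -
    have "2 * (\<Sum>j\<in>V k. (gv j k - mS gv k) * gdS xv \<delta> gv j k) =
      - (2 * (\<Sum>j\<in>V k. (gv j k - mS gv k) * (\<Sum>l\<in>V k. A j l * (gv j k - gv l k))))
      + (\<Sum>j\<in>V k. 2 * (gv j k - mS gv k) * hS xv \<delta> gv j k)"
      unfolding gdS_def by (simp add: algebra_simps sum.distrib sum_subtractf sum_distrib_left)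
    also have "- (2 * (\<Sum>j\<in>V k. (gv j k - mS gv k) * (\<Sum>l\<in>V k. A j l * (gv j k - gv l k))))
        = - lapQ (V k) A (\<lambda>j. gv j k)"
      using lap_ident[OF finV sym_V, of "\<lambda>j. gv j k" "mS gv k"] by simp
    also have "- lapQ (V k) A (\<lambda>j. gv j k) \<le> - lam * (\<Sum>j\<in>V k. (gv j k - mS gv k)\<^sup>2)"
      using lam(2)[where k=k and y="\<lambda>j. gv j k"] by (simp add: mS_def)
    also have "(\<Sum>j\<in>V k. 2 * (gv j k - mS gv k) * hS xv \<delta> gv j k)
       \<le> (\<Sum>j\<in>V k. lam / 2 * (gv j k - mS gv k)\<^sup>2 + (hS xv \<delta> gv j k)\<^sup>2 / (lam / 2))"
      by (intro sum_mono young) (use lam(1) in auto)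
    also have "\<dots> = (\<Sum>j\<in>V k. lam / 2 * (gv j k - mS gv k)\<^sup>2 + (2 / lam) * (hS xv \<delta> gv j k)\<^sup>2)"
      by (intro sum.cong refl) simp
    also have "\<dots> = lam / 2 * (\<Sum>j\<in>V k. (gv j k - mS gv k)\<^sup>2) + (2 / lam) * (\<Sum>j\<in>V k. (hS xv \<delta> gv j k)\<^sup>2)"
      by (simp only: sum.distrib sum_distrib_left)
    finally show ?thesis by simp
  qed
  then have "(\<Sum>k\<in>UNIV. 2 * (\<Sum>j\<in>V k. (gv j k - mS gv k) * gdS xv \<delta> gv j k))
     \<le> (\<Sum>k\<in>UNIV. - lam * (\<Sum>j\<in>V k. (gv j k - mS gv k)\<^sup>2) + (lam / 2 * (\<Sum>j\<in>V k. (gv j k - mS gv k)\<^sup>2)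
        + (2 / lam) * (\<Sum>j\<in>V k. (hS xv \<delta> gv j k)\<^sup>2)))"
    by (rule sum_mono)
  also have "\<dots> = - lam * ES gv + lam / 2 * ES gv + (2 / lam) * (\<Sum>k\<in>UNIV. \<Sum>j\<in>V k. (hS xv \<delta> gv j k)\<^sup>2)"
    unfolding ES_def by (simp add: sum.distrib sum_distrib_left)
  finally show ?thesis .
qed

lemma hbound:
  assumes "norm (D2f j xv) \<le> M"
  shows "(hS xv \<delta> gv j k)\<^sup>2 \<le> M\<^sup>2 * (norm (xdS \<delta> gv))\<^sup>2"
proof -
  have "\<bar>hS xv \<delta> gv j k\<bar> \<le> norm (blinfun_apply (D2f j xv) (xdS \<delta> gv)) * norm (axis k (1::real))"
    unfolding hS_def using norm_blinfun by (metis real_norm_def)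
  also have "\<dots> \<le> norm (D2f j xv) * norm (xdS \<delta> gv)" using norm_blinfun by simp
  also have "\<dots> \<le> M * norm (xdS \<delta> gv)" using assms by (simp add: mult_right_mono)
  finally have "\<bar>hS xv \<delta> gv j k\<bar> \<le> M * norm (xdS \<delta> gv)" .
  then have "\<bar>hS xv \<delta> gv j k\<bar>\<^sup>2 \<le> (M * norm (xdS \<delta> gv))\<^sup>2"
    by (intro power_mono) auto
  then show ?thesis by (simp add: power_mult_distrib)
qed

lemma Hsum:
  assumes "\<forall>j. norm (D2f j xv) \<le> M"
  shows "(\<Sum>k\<in>UNIV. \<Sum>j\<in>V k. (hS xv \<delta> gv j k)\<^sup>2) \<le> (real CARD('a)) * ((real CARD('a)) * (M\<^sup>2 * (norm (xdS \<delta> gv))\<^sup>2))"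
proof -
  have "(\<Sum>j\<in>V k. (hS xv \<delta> gv j k)\<^sup>2) \<le> (real CARD('a)) * (M\<^sup>2 * (norm (xdS \<delta> gv))\<^sup>2)" for k
  proof -
    have "(\<Sum>j\<in>V k. (hS xv \<delta> gv j k)\<^sup>2) \<le> (\<Sum>j\<in>V k. M\<^sup>2 * (norm (xdS \<delta> gv))\<^sup>2)"
      using assms by (intro sum_mono hbound) auto
    also have "\<dots> = real (n k) * (M\<^sup>2 * (norm (xdS \<delta> gv))\<^sup>2)" by simp
    also have "\<dots> \<le> (real CARD('a)) * (M\<^sup>2 * (norm (xdS \<delta> gv))\<^sup>2)" by (intro mult_right_mono n_le) auto
    finally show ?thesis .
  qed
  then have "(\<Sum>k\<in>UNIV. \<Sum>j\<in>V k. (hS xv \<delta> gv j k)\<^sup>2) \<le> (\<Sum>k\<in>(UNIV::'a set). (real CARD('a)) * (M\<^sup>2 * (norm (xdS \<delta> gv))\<^sup>2))"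
    by (rule sum_mono)
  then show ?thesis by simp
qed

lemma diag_le_ES: "(\<Sum>k\<in>UNIV. (gv k k - mS gv k)\<^sup>2) \<le> ES gv"
  unfolding ES_def by (intro sum_mono member_le_sum) (auto simp: kV)

lemma mS_inv: "invS xv gv \<Longrightarrow> real (n k) * mS gv k = Pg xv $ k"
  unfolding invS_def mS_def using n_pos[of k] kV[of k] by auto

lemma xdbound:
  assumes M: "\<forall>j. \<bar>Pg xv $ j\<bar> \<le> M" and inv: "invS xv gv"
  shows "(norm (xdS \<delta> gv))\<^sup>2 \<le> \<delta>\<^sup>2 * dmax\<^sup>2 * (2 * (real CARD('a)) * M\<^sup>2 + 2 * ES gv)"
proof -
  have mb: "(mS gv j)\<^sup>2 \<le> M\<^sup>2" for j
  proof -
    have "real (n j) * \<bar>mS gv j\<bar> \<le> M" using mS_inv[OF inv, of j] M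
      by (metis abs_mult abs_of_nat)
    moreover have "\<bar>mS gv j\<bar> \<le> real (n j) * \<bar>mS gv j\<bar>" using n_pos[of j]
      by (simp add: mult_le_cancel_right1)
    ultimately have "\<bar>mS gv j\<bar> \<le> M" by linarith
    then show ?thesis by (metis abs_ge_zero power2_abs power_mono)
  qed
  have t: "(xdS \<delta> gv $ j)\<^sup>2 \<le> \<delta>\<^sup>2 * dmax\<^sup>2 * (2 * M\<^sup>2 + 2 * (gv j j - mS gv j)\<^sup>2)" for j
  proof -
    have "(xdS \<delta> gv $ j)\<^sup>2 = \<delta>\<^sup>2 * (dbar j)\<^sup>2 * (gv j j)\<^sup>2"
      unfolding xdS_def by (simp add: power_mult_distrib)
    also have "\<dots> \<le> \<delta>\<^sup>2 * dmax\<^sup>2 * (gv j j)\<^sup>2"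
      using dmax[of j] dbar_pos[of j] by (intro mult_right_mono mult_left_mono power_mono) auto
    also have "(gv j j)\<^sup>2 \<le> 2 * M\<^sup>2 + 2 * (gv j j - mS gv j)\<^sup>2"
      using sq_tri[of "gv j j" 0 "mS gv j"] mb[of j] by (simp add: power2_commute)
    then have "\<delta>\<^sup>2 * dmax\<^sup>2 * (gv j j)\<^sup>2 \<le> \<delta>\<^sup>2 * dmax\<^sup>2 * (2 * M\<^sup>2 + 2 * (gv j j - mS gv j)\<^sup>2)"
      by (intro mult_left_mono) auto
    finally show ?thesis .
  qed
  have s2: "(\<Sum>j\<in>UNIV. 2 * M\<^sup>2 + 2 * (gv j j - mS gv j)\<^sup>2) = 2 * (real CARD('a)) * M\<^sup>2 + 2 * (\<Sum>j\<in>UNIV. (gv j j - mS gv j)\<^sup>2)"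
    by (simp add: sum.distrib sum_distrib_left)
  have "(norm (xdS \<delta> gv))\<^sup>2 = (\<Sum>j\<in>UNIV. (xdS \<delta> gv $ j)\<^sup>2)" by (rule norm_sq_vec)
  also have "\<dots> \<le> (\<Sum>j\<in>UNIV. \<delta>\<^sup>2 * dmax\<^sup>2 * (2 * M\<^sup>2 + 2 * (gv j j - mS gv j)\<^sup>2))"
    by (rule sum_mono[OF t])
  also have "\<dots> = \<delta>\<^sup>2 * dmax\<^sup>2 * (\<Sum>j\<in>UNIV. 2 * M\<^sup>2 + 2 * (gv j j - mS gv j)\<^sup>2)"
    by (simp only: sum_distrib_left)
  also have "\<dots> = \<delta>\<^sup>2 * dmax\<^sup>2 * (2 * (real CARD('a)) * M\<^sup>2 + 2 * (\<Sum>j\<in>UNIV. (gv j j - mS gv j)\<^sup>2))"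
    using s2 by simp
  also have "\<dots> \<le> \<delta>\<^sup>2 * dmax\<^sup>2 * (2 * (real CARD('a)) * M\<^sup>2 + 2 * ES gv)"
    using diag_le_ES[of gv] by (intro mult_left_mono) auto
  finally show ?thesis .
qed

lemma T3:
  assumes inv: "invS xv gv" and d: "\<delta> > 0"
  shows "(\<Sum>k\<in>UNIV. 2 * om k * (xv$k - xs$k) * (xdS \<delta> gv $ k))
     \<le> - 2 * \<delta> * rho xv + lam / 4 * ES gv + (4 / lam) * \<delta>\<^sup>2 * (real CARD('a))\<^sup>2 * (norm (xv - xs))\<^sup>2"
proof -
  have t: "2 * om k * (xv$k - xs$k) * (xdS \<delta> gv $ k) \<le>
     - 2 * \<delta> * ((xv$k - xs$k) * Pg xv $ k) + lam / 4 * (gv k k - mS gv k)\<^sup>2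
       + (4 / lam) * \<delta>\<^sup>2 * (real CARD('a))\<^sup>2 * (xv$k - xs$k)\<^sup>2" for k
  proof -
    define u where "u = xv$k - xs$k"
    define e where "e = gv k k - mS gv k"
    have omd: "om k * dbar k = real (n k)" unfolding om_def using dbar_pos[of k] by simp
    have "2 * om k * u * (xdS \<delta> gv $ k) = - 2 * \<delta> * (real (n k) * gv k k) * u"
      unfolding xdS_def using omd by (simp add: algebra_simps)
    also have "real (n k) * gv k k = Pg xv $ k + real (n k) * e"
      using mS_inv[OF inv, of k] unfolding e_def by (simp add: algebra_simps)
    finally have eq: "2 * om k * u * (xdS \<delta> gv $ k) = - 2 * \<delta> * (u * Pg xv $ k) + 2 * e * (- (\<delta> * real (n k) * u))"
      by (simp add: algebra_simps)
    have "2 * e * (- (\<delta> * real (n k) * u)) \<le> lam / 4 * e\<^sup>2 + (- (\<delta> * real (n k) * u))\<^sup>2 / (lam / 4)"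
      by (rule young) (use lam(1) in auto)
    also have "(- (\<delta> * real (n k) * u))\<^sup>2 / (lam / 4) = (4 / lam) * \<delta>\<^sup>2 * (real (n k))\<^sup>2 * u\<^sup>2"
      by (simp add: power_mult_distrib field_simps)
    also have "\<dots> \<le> (4 / lam) * \<delta>\<^sup>2 * (real CARD('a))\<^sup>2 * u\<^sup>2"
      using lam(1) n_le[of k] by (intro mult_right_mono mult_left_mono power_mono) auto
    finally show ?thesis using eq unfolding u_def e_def by linarith
  qed
  have "(\<Sum>k\<in>UNIV. 2 * om k * (xv$k - xs$k) * (xdS \<delta> gv $ k)) \<le>
     (\<Sum>k\<in>UNIV. - 2 * \<delta> * ((xv$k - xs$k) * Pg xv $ k) + lam / 4 * (gv k k - mS gv k)\<^sup>2
       + (4 / lam) * \<delta>\<^sup>2 * (real CARD('a))\<^sup>2 * (xv$k - xs$k)\<^sup>2)"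
    by (rule sum_mono[OF t])
  also have "\<dots> = - 2 * \<delta> * (\<Sum>k\<in>UNIV. (xv$k - xs$k) * Pg xv $ k) + lam / 4 * (\<Sum>k\<in>UNIV. (gv k k - mS gv k)\<^sup>2)
       + (4 / lam) * \<delta>\<^sup>2 * (real CARD('a))\<^sup>2 * (\<Sum>k\<in>UNIV. (xv$k - xs$k)\<^sup>2)"
    by (simp only: sum.distrib sum_distrib_left)
  also have "(\<Sum>k\<in>UNIV. (xv$k - xs$k) * Pg xv $ k) = rho xv"
    unfolding rho_eq using Pg_xs by simp
  also have "(\<Sum>k\<in>UNIV. (xv$k - xs$k)\<^sup>2) = (norm (xv - xs))\<^sup>2" by (simp add: norm_sq_vec)
  finally have fin: "(\<Sum>k\<in>UNIV. 2 * om k * (xv$k - xs$k) * (xdS \<delta> gv $ k))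
     \<le> - 2 * \<delta> * rho xv + lam / 4 * (\<Sum>k\<in>UNIV. (gv k k - mS gv k)\<^sup>2) + (4 / lam) * \<delta>\<^sup>2 * (real CARD('a))\<^sup>2 * (norm (xv - xs))\<^sup>2" .
  have "lam / 4 * (\<Sum>k\<in>UNIV. (gv k k - mS gv k)\<^sup>2) \<le> lam / 4 * ES gv"
    using diag_le_ES[of gv] lam(1) by (intro mult_left_mono) auto
  then show ?thesis using fin by linarith
qed

lemma key_bound:
  "\<exists>C>0. \<exists>\<delta>1>0. \<forall>\<delta> xv gv. 0 < \<delta> \<longrightarrow> \<delta> \<le> \<delta>1 \<longrightarrow> invS xv gv \<longrightarrow> Wf xv \<le> Rr \<longrightarrow>
     UdS xv \<delta> gv \<le> - \<delta> * (lam / 8 * ES gv + 2 * rho xv) + C * \<delta>\<^sup>2"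
proof -
  obtain M where M: "M \<ge> 0" "\<forall>xv. Wf xv \<le> Rr \<longrightarrow> (\<forall>j. norm (D2f j xv) \<le> M) \<and> (\<forall>j. \<bar>Pg xv $ j\<bar> \<le> M)"
    using bounds by blast
  define NN where "NN = real CARD('a)"
  have NN: "NN \<ge> 0" unfolding NN_def by simp
  define K1 where "K1 = (4 / lam) * NN\<^sup>2 * M\<^sup>2 * dmax\<^sup>2"
  have K1: "K1 \<ge> 0" unfolding K1_def using lam(1) by simp
  define Rp where "Rp = max Rr 0"
  define C where "C = K1 * NN * M\<^sup>2 + (4 / lam) * NN\<^sup>2 * (Rp / ommin) + 1"
  have "K1 * NN * M\<^sup>2 \<ge> 0" using K1 NN by simp
  moreover have "(4 / lam) * NN\<^sup>2 * (Rp / ommin) \<ge> 0"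
    using lam(1) ommin_pos unfolding Rp_def by (intro mult_nonneg_nonneg divide_nonneg_pos) auto
  ultimately have C0: "C > 0" unfolding C_def by linarith
  define d1 where "d1 = min 1 (lam / (8 * (K1 + 1)))"
  have d1: "d1 > 0" unfolding d1_def using lam(1) K1 by simp
  show ?thesis
  proof (rule exI[of _ C], rule conjI[OF C0], rule exI[of _ d1], rule conjI[OF d1], intro allI impI)
    fix \<delta> xv gv assume d: "0 < \<delta>" "\<delta> \<le> d1" and inv: "invS xv gv" and W: "Wf xv \<le> Rr"
    have d_1: "\<delta> \<le> 1" using d unfolding d1_def by simp
    have MD: "\<forall>j. norm (D2f j xv) \<le> M" and MP: "\<forall>j. \<bar>Pg xv $ j\<bar> \<le> M" using M(2) W by auto
    define E where "E = ES gv"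
    have E0: "E \<ge> 0" unfolding E_def by (rule ES_nonneg)
    define H where "H = (\<Sum>k\<in>UNIV. \<Sum>j\<in>V k. (hS xv \<delta> gv j k)\<^sup>2)"
    define X where "X = (norm (xdS \<delta> gv))\<^sup>2"
    have H1: "H \<le> NN * (NN * (M\<^sup>2 * X))" unfolding H_def X_def NN_def by (rule Hsum[OF MD])
    have X1: "X \<le> \<delta>\<^sup>2 * dmax\<^sup>2 * (2 * NN * M\<^sup>2 + 2 * E)" unfolding X_def E_def NN_def by (rule xdbound[OF MP inv])
    have "NN * (NN * (M\<^sup>2 * X)) \<le> NN * (NN * (M\<^sup>2 * (\<delta>\<^sup>2 * dmax\<^sup>2 * (2 * NN * M\<^sup>2 + 2 * E))))"
      using X1 NN by (intro mult_left_mono) auto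
    also have "(2 / lam) * \<dots> = K1 * \<delta>\<^sup>2 * (NN * M\<^sup>2) + K1 * \<delta>\<^sup>2 * E"
      unfolding K1_def using lam(1) by (simp add: field_simps power2_eq_square)
    finally have H2: "(2 / lam) * H \<le> K1 * \<delta>\<^sup>2 * (NN * M\<^sup>2) + K1 * \<delta>\<^sup>2 * E"
      using H1 lam(1) by (smt (verit) divide_pos_pos mult_le_cancel_left_pos)
    have dd: "\<delta>\<^sup>2 \<le> \<delta>" using d d_1 by (simp add: power2_eq_square mult_le_cancel_left1)
    have "K1 * \<delta>\<^sup>2 \<le> K1 * d1" using dd d K1 by (meson mult_left_mono order_trans)
    also have "\<dots> \<le> K1 * (lam / (8 * (K1 + 1)))" using K1 unfolding d1_def by (intro mult_left_mono) auto
    also have "\<dots> \<le> lam / 8" using K1 lam(1) by (simp add: field_simps)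
    finally have K1d: "K1 * \<delta>\<^sup>2 \<le> lam / 8" .
    have K1E: "K1 * \<delta>\<^sup>2 * E \<le> lam / 8 * E" using K1d E0 by (rule mult_right_mono)
    have u: "(norm (xv - xs))\<^sup>2 \<le> Rp / ommin"
      using Wf_lower[of xv] W ommin_pos unfolding Rp_def by (simp add: field_simps)
    have uq: "(4 / lam) * \<delta>\<^sup>2 * NN\<^sup>2 * (norm (xv - xs))\<^sup>2 \<le> (4 / lam) * \<delta>\<^sup>2 * NN\<^sup>2 * (Rp / ommin)"
      using u lam(1) by (intro mult_left_mono) auto
    have T12': "(\<Sum>k\<in>UNIV. 2 * (\<Sum>j\<in>V k. (gv j k - mS gv k) * gdS xv \<delta> gv j k)) \<le> - lam * E + lam / 2 * E + (2 / lam) * H"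
      unfolding E_def H_def by (rule T12)
    have T3': "(\<Sum>k\<in>UNIV. 2 * om k * (xv$k - xs$k) * (xdS \<delta> gv $ k))
     \<le> - 2 * \<delta> * rho xv + lam / 4 * E + (4 / lam) * \<delta>\<^sup>2 * NN\<^sup>2 * (norm (xv - xs))\<^sup>2"
      unfolding E_def NN_def by (rule T3[OF inv d(1)])
    have f1: "UdS xv \<delta> gv \<le> - (lam / 8) * E - 2 * \<delta> * rho xv + \<delta>\<^sup>2 * (K1 * NN * M\<^sup>2 + (4 / lam) * NN\<^sup>2 * (Rp / ommin))"
      using T12' T3' H2 K1E uq unfolding UdS_def by (simp add: algebra_simps)
    have f2: "- (lam / 8) * E \<le> - \<delta> * (lam / 8 * E)"
    proof -
      have "\<delta> * (lam / 8 * E) \<le> 1 * (lam / 8 * E)" using d_1 E0 lam(1) by (intro mult_right_mono) auto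
      then show ?thesis by simp
    qed
    have f3: "\<delta>\<^sup>2 * (K1 * NN * M\<^sup>2 + (4 / lam) * NN\<^sup>2 * (Rp / ommin)) \<le> C * \<delta>\<^sup>2"
      unfolding C_def by (simp add: algebra_simps)
    have eqq: "- \<delta> * (lam / 8 * ES gv + 2 * rho xv) = - \<delta> * (lam / 8 * E) - 2 * \<delta> * rho xv"
      unfolding E_def by (simp add: algebra_simps)
    have fin: "UdS xv \<delta> gv \<le> - \<delta> * (lam / 8 * ES gv + 2 * rho xv) + C * \<delta>\<^sup>2"
      using f1 f2 f3 eqq by linarith
    then show "UdS xv \<delta> gv \<le> - \<delta> * (lam / 8 * ES gv + 2 * rho xv) + C * \<delta>\<^sup>2" .
  qed
qed

end

lemma deriv_zero_const:
  fixes F :: "real \<Rightarrow> real"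
  assumes "\<forall>t\<ge>0. (F has_real_derivative 0) (at t within {0..})" "t \<ge> 0"
  shows "F t = F 0"
proof (cases "t = 0")
  case True then show ?thesis by simp
next
  case False
  then have t0: "0 < t" using assms(2) by simp
  have "\<And>x. 0 \<le> x \<Longrightarrow> x \<le> t \<Longrightarrow> (F has_derivative (*) 0) (at x within {0..t})"
    using der_sub[OF assms(1)] by (simp add: has_field_derivative_def)
  from mvt_simple[OF t0 this] show ?thesis by auto
qed

lemma lap_sum_zero:
  fixes V :: "'a set" and A :: "'a \<Rightarrow> 'a \<Rightarrow> real"
  assumes sym: "\<forall>j\<in>V. \<forall>l\<in>V. A j l = A l j"
  shows "(\<Sum>j\<in>V. \<Sum>l\<in>V. A j l * (y j - y l)) = 0"
proof -
  define X where "X = (\<Sum>j\<in>V. \<Sum>l\<in>V. A j l * (y j - y l))"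
  have "X = (\<Sum>l\<in>V. \<Sum>j\<in>V. A j l * (y j - y l))" unfolding X_def by (rule sum.swap)
  also have "\<dots> = (\<Sum>l\<in>V. \<Sum>j\<in>V. - (A l j * (y l - y j)))"
    using sym by (intro sum.cong refl) (auto simp: algebra_simps)
  also have "\<dots> = - X" unfolding X_def by (simp add: sum_negf)
  finally show ?thesis unfolding X_def by simp
qed

lemma hrd_commI: "(f has_derivative (\<lambda>h. h * D)) F \<Longrightarrow> (f has_real_derivative D) F"
proof -
  have "(*) D = (\<lambda>h. h * D)" by (auto simp: fun_eq_iff mult.commute)
  then show "(f has_derivative (\<lambda>h. h * D)) F \<Longrightarrow> (f has_real_derivative D) F"
    unfolding has_field_derivative_def by simp
qed

context game begin

context
  fixes \<delta> :: real and x :: "real \<Rightarrow> real^'a" and w :: "'a \<Rightarrow> 'a \<Rightarrow> real \<Rightarrow> real"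
  assumes sol: "seeking_solution c f A (\<lambda>a. \<delta> * dbar a) x w"
begin

definition "gt t = (\<lambda>j k. gval f (x t) (\<lambda>p q. w p q t) j k)"

lemma gt_eq: "gt t j k = w j k t + partial (f j) k (x t)"
  unfolding gt_def gval_def ..

lemma xder: "t \<ge> 0 \<Longrightarrow> (x has_vector_derivative xdS \<delta> (gt t)) (at t within {0..})"
  using sol unfolding seeking_solution_def xdS_def gt_def by simp

lemma xcomp_der: "t \<ge> 0 \<Longrightarrow> ((\<lambda>s. x s $ k) has_real_derivative xdS \<delta> (gt t) $ k) (at t within {0..})"
proof -
  assume t: "t \<ge> 0"
  have "((\<lambda>s. x s $ k) has_derivative (\<lambda>h. (h *\<^sub>R xdS \<delta> (gt t)) $ k)) (at t within {0..})"
    using bounded_linear.has_derivative[OF bounded_linear_vec_nth xder[OF t, unfolded has_vector_derivative_def]] .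
  then show ?thesis by (intro hrd_commI) simp
qed

lemma pder: "t \<ge> 0 \<Longrightarrow> ((\<lambda>s. partial (f j) k (x s)) has_real_derivative hS (x t) \<delta> (gt t) j k) (at t within {0..})"
proof -
  assume t: "t \<ge> 0"
  define X where "X = xdS \<delta> (gt t)"
  have xd: "(x has_derivative (\<lambda>h. h *\<^sub>R X)) (at t within {0..})"
    using xder[OF t] unfolding X_def has_vector_derivative_def .
  have dd: "(Df j has_derivative blinfun_apply (D2f j (x t))) (at (x t) within x ` {0..})"
    using D2f by (rule has_derivative_at_withinI)
  have "((\<lambda>s. Df j (x s)) has_derivative (\<lambda>h. blinfun_apply (D2f j (x t)) (h *\<^sub>R X))) (at t within {0..})"
    using diff_chain_within[OF xd dd] by (simp add: o_def)
  then have "((\<lambda>s. blinfun_apply (Df j (x s)) (axis k 1)) has_derivative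
      (\<lambda>h. blinfun_apply (blinfun_apply (D2f j (x t)) (h *\<^sub>R X)) (axis k 1))) (at t within {0..})"
    by (rule bounded_linear.has_derivative[OF bounded_linear_apply_blinfun])
  then show ?thesis unfolding partial_f hS_def X_def[symmetric]
    by (intro hrd_commI) (simp add: blinfun.scaleR_right blinfun.scaleR_left)
qed

lemma wder: "j \<in> V k \<Longrightarrow> t \<ge> 0 \<Longrightarrow> (w j k has_real_derivative
            (- (\<Sum>l\<in>V k. A j l * (gt t j k - gt t l k)))) (at t within {0..})"
proof -
  assume jk: "j \<in> V k" and t: "t \<ge> 0"
  have kj: "k \<in> cvert c f j" using jk cvert_sym by metis
  have "\<forall>t\<ge>0. (w j k has_real_derivative
            (- (\<Sum>l\<in>cvert c f k. A j l * (gval f (x t) (\<lambda>p q. w p q t) j k - gval f (x t) (\<lambda>p q. w p q t) l k))))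
          (at t within {0..})"
    using sol kj unfolding seeking_solution_def by blast
  then show ?thesis using t unfolding gt_def by blast
qed

lemma gder: "j \<in> V k \<Longrightarrow> t \<ge> 0 \<Longrightarrow> ((\<lambda>s. gt s j k) has_real_derivative gdS (x t) \<delta> (gt t) j k) (at t within {0..})"
proof -
  assume jk: "j \<in> V k" and t: "t \<ge> 0"
  have e1: "(\<lambda>s. gt s j k) = (\<lambda>s. w j k s + partial (f j) k (x s))" by (simp add: fun_eq_iff gt_eq)
  have e2: "gdS (x t) \<delta> (gt t) j k = - (\<Sum>l\<in>V k. A j l * (gt t j k - gt t l k)) + hS (x t) \<delta> (gt t) j k"
    by (simp add: gdS_def)
  show ?thesis unfolding e1 e2 by (rule DERIV_add[OF wder[OF jk t] pder[OF t]])
qed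

lemma w0: "j \<in> V k \<Longrightarrow> w j k 0 = 0"
proof -
  assume "j \<in> V k"
  then have "k \<in> cvert c f j" using cvert_sym by metis
  then show ?thesis using sol unfolding seeking_solution_def by blast
qed

lemma inv: "t \<ge> 0 \<Longrightarrow> invS (x t) (gt t)"
proof -
  assume t: "t \<ge> 0"
  have "(\<Sum>j\<in>V k. w j k t) = 0" for k
  proof -
    have "\<forall>s\<ge>0. ((\<lambda>s. \<Sum>j\<in>V k. w j k s) has_real_derivative 0) (at s within {0..})"
    proof (intro allI impI)
      fix s :: real assume s: "s \<ge> 0"
      have "\<And>j. j \<in> V k \<Longrightarrow> (w j k has_real_derivative (- (\<Sum>l\<in>V k. A j l * (gt s j k - gt s l k)))) (at s within {0..})"
        using wder s by blast
      then have "((\<lambda>s. \<Sum>j\<in>V k. w j k s) has_real_derivative (\<Sum>j\<in>V k. - (\<Sum>l\<in>V k. A j l * (gt s j k - gt s l k)))) (at s within {0..})"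
        by (rule DERIV_sum)
      moreover have "(\<Sum>j\<in>V k. - (\<Sum>l\<in>V k. A j l * (gt s j k - gt s l k))) = 0"
        using lap_sum_zero[OF sym_V[of k], where y="\<lambda>j. gt s j k"] by (simp add: sum_negf)
      ultimately show "((\<lambda>s. \<Sum>j\<in>V k. w j k s) has_real_derivative 0) (at s within {0..})" by simp
    qed
    from deriv_zero_const[OF this t] show ?thesis using w0 by simp
  qed
  then show ?thesis unfolding invS_def gt_eq Pg_def pg_eq by (simp add: sum.distrib)
qed

definition "Ut t = ES (gt t) + Wf (x t)"

lemma Uder: "t \<ge> 0 \<Longrightarrow> (Ut has_real_derivative UdS (x t) \<delta> (gt t)) (at t within {0..})"
proof -
  assume t: "t \<ge> 0"
  define gd where "gd j k = gdS (x t) \<delta> (gt t) j k" for j k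
  define md where "md k = (\<Sum>l\<in>V k. gd l k) / real (n k)" for k
  have mder: "((\<lambda>s. mS (gt s) k) has_real_derivative md k) (at t within {0..})" for k
    unfolding mS_def md_def gd_def
    by (intro DERIV_cdivide DERIV_sum gder[OF _ t])
  have sqder: "((\<lambda>s. (gt s j k - mS (gt s) k)\<^sup>2) has_real_derivative
       of_nat 2 * ((gd j k - md k) * (gt t j k - mS (gt t) k) ^ (2 - Suc 0))) (at t within {0..})"
    if "j \<in> V k" for j k
    unfolding gd_def by (intro DERIV_power DERIV_diff gder[OF that t] mder[unfolded gd_def])
  have Eder: "((\<lambda>s. ES (gt s)) has_real_derivative
      (\<Sum>k\<in>UNIV. \<Sum>j\<in>V k. of_nat 2 * ((gd j k - md k) * (gt t j k - mS (gt t) k) ^ (2 - Suc 0)))) (at t within {0..})"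
    unfolding ES_def by (intro DERIV_sum sqder)
  have Wder: "((\<lambda>s. Wf (x s)) has_real_derivative
      (\<Sum>k\<in>UNIV. om k * (of_nat 2 * ((xdS \<delta> (gt t) $ k - 0) * (x t $ k - xs $ k) ^ (2 - Suc 0))))) (at t within {0..})"
    unfolding Wf_def by (intro DERIV_sum DERIV_cmult DERIV_power DERIV_diff xcomp_der[OF t] DERIV_const)
  have e1: "(\<Sum>j\<in>V k. of_nat 2 * ((gd j k - md k) * (gt t j k - mS (gt t) k) ^ (2 - Suc 0)))
      = 2 * (\<Sum>j\<in>V k. (gt t j k - mS (gt t) k) * gd j k)" for k
  proof -
    have z: "(\<Sum>j\<in>V k. gt t j k - mS (gt t) k) = 0"
      unfolding mS_def by (rule sum_dev_zero) (use kV in auto)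
    have "(\<Sum>j\<in>V k. of_nat 2 * ((gd j k - md k) * (gt t j k - mS (gt t) k) ^ (2 - Suc 0)))
       = (\<Sum>j\<in>V k. 2 * ((gt t j k - mS (gt t) k) * gd j k) - 2 * md k * (gt t j k - mS (gt t) k))"
      by (intro sum.cong refl) (simp add: algebra_simps)
    also have "\<dots> = (\<Sum>j\<in>V k. 2 * ((gt t j k - mS (gt t) k) * gd j k)) - (\<Sum>j\<in>V k. 2 * md k * (gt t j k - mS (gt t) k))"
      by (rule sum_subtractf)
    also have "\<dots> = 2 * (\<Sum>j\<in>V k. (gt t j k - mS (gt t) k) * gd j k) - 2 * md k * (\<Sum>j\<in>V k. gt t j k - mS (gt t) k)"
      by (simp only: sum_distrib_left)
    finally show ?thesis using z by simp
  qed
  have e2: "(\<Sum>k\<in>UNIV. om k * (of_nat 2 * ((xdS \<delta> (gt t) $ k - 0) * (x t $ k - xs $ k) ^ (2 - Suc 0))))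
      = (\<Sum>k\<in>UNIV. 2 * om k * (x t $ k - xs $ k) * (xdS \<delta> (gt t) $ k))"
    by (intro sum.cong refl) (simp add: algebra_simps)
  have "(Ut has_real_derivative
      (\<Sum>k\<in>UNIV. \<Sum>j\<in>V k. of_nat 2 * ((gd j k - md k) * (gt t j k - mS (gt t) k) ^ (2 - Suc 0)))
      + (\<Sum>k\<in>UNIV. om k * (of_nat 2 * ((xdS \<delta> (gt t) $ k - 0) * (x t $ k - xs $ k) ^ (2 - Suc 0))))) (at t within {0..})"
    unfolding Ut_def[abs_def] by (rule DERIV_add[OF Eder Wder])
  moreover have "(\<Sum>k\<in>UNIV. \<Sum>j\<in>V k. of_nat 2 * ((gd j k - md k) * (gt t j k - mS (gt t) k) ^ (2 - Suc 0)))
      + (\<Sum>k\<in>UNIV. om k * (of_nat 2 * ((xdS \<delta> (gt t) $ k - 0) * (x t $ k - xs $ k) ^ (2 - Suc 0))))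
      = UdS (x t) \<delta> (gt t)"
  proof -
    have e1': "(\<Sum>k\<in>UNIV. \<Sum>j\<in>V k. of_nat 2 * ((gd j k - md k) * (gt t j k - mS (gt t) k) ^ (2 - Suc 0)))
       = (\<Sum>k\<in>UNIV. 2 * (\<Sum>j\<in>V k. (gt t j k - mS (gt t) k) * gd j k))"
      by (rule sum.cong[OF refl e1])
    show ?thesis by (subst e1', subst e2) (simp add: UdS_def gd_def)
  qed
  ultimately show ?thesis by simp
qed

end
end

lemma dev_sq:
  fixes V :: "'a set" and y :: "'a \<Rightarrow> real" assumes "finite V" "V \<noteq> {}"
  shows "(\<Sum>j\<in>V. (y j)\<^sup>2) - (\<Sum>j\<in>V. y j)\<^sup>2 / card V = (\<Sum>j\<in>V. (y j - (\<Sum>l\<in>V. y l) / card V)\<^sup>2)"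
proof -
  define m where "m = (\<Sum>l\<in>V. y l) / card V"
  define S where "S = (\<Sum>l\<in>V. y l)"
  have n: "real (card V) > 0" using assms by (simp add: card_gt_0_iff)
  have Sm: "S = card V * m" unfolding m_def S_def using n by simp
  have "(\<Sum>j\<in>V. (y j - m)\<^sup>2) = (\<Sum>j\<in>V. (y j)\<^sup>2 - 2 * m * y j + m\<^sup>2)"
    by (intro sum.cong refl) (simp add: power2_eq_square algebra_simps)
  also have "\<dots> = (\<Sum>j\<in>V. (y j)\<^sup>2) - 2 * m * S + card V * m\<^sup>2"
    unfolding S_def by (simp add: sum.distrib sum_subtractf sum_distrib_left)
  finally have "(\<Sum>j\<in>V. (y j - m)\<^sup>2) = (\<Sum>j\<in>V. (y j)\<^sup>2) - 2 * m * S + card V * m\<^sup>2" .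
  moreover have "S\<^sup>2 / card V = card V * m\<^sup>2" unfolding Sm using n by (simp add: power2_eq_square)
  ultimately show ?thesis unfolding m_def[symmetric] S_def[symmetric] using Sm
    by (simp add: power2_eq_square algebra_simps)
qed

context game begin

lemma chi_sq: "chi_norm c f R xs xv wv = sqrt (ES (\<lambda>j k. gval f xv wv j k) + (norm (xv - xs))\<^sup>2)"
proof -
  have "(\<Sum>p<card (V k) - 1. (\<Sum>j\<in>V k. R k j p * gval f xv wv j k)\<^sup>2)
      = (\<Sum>j\<in>V k. (gval f xv wv j k - mS (\<lambda>j k. gval f xv wv j k) k)\<^sup>2)" for k
  proof -
    have o: "\<forall>p<card (V k) - 1. \<forall>q<card (V k) - 1. (\<Sum>j\<in>V k. R k j p * R k j q) = (if p = q then 1 else 0)"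
      and z: "\<forall>p<card (V k) - 1. (\<Sum>j\<in>V k. R k j p) = 0"
      using Rorth unfolding orth_compl_def by blast+
    have ne: "V k \<noteq> {}" using kV by auto
    show ?thesis using parseval[OF o z ne, of "\<lambda>j. gval f xv wv j k"] dev_sq[OF finV ne, of "\<lambda>j. gval f xv wv j k"]
      unfolding mS_def by simp
  qed
  then show ?thesis unfolding chi_norm_def ES_def by simp
qed

definition "al r = min (lam / 32 * r) (rhot (r / 2))"

lemma al_fun: "alpha_fun al"
proof
  fix a b :: real assume ab: "0 < a" "a \<le> b"
  have "lam / 32 * a \<le> lam / 32 * b" using ab lam(1) by simp
  moreover have "rhot (a / 2) \<le> rhot (b / 2)" using ab by (intro rhot_mono) auto
  ultimately show "al a \<le> al b" unfolding al_def by (rule min.mono)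
next
  fix a :: real assume "0 < a"
  then show "al a > 0" unfolding al_def using lam(1) rhot_pos[of "a/2"] by simp
qed

lemma al_bound:
  assumes "invS xv gv" "u = ES gv + Wf xv" "u > 0"
  shows "2 * al u \<le> lam / 8 * ES gv + 2 * rho xv"
proof (cases "ES gv \<ge> u / 2")
  case True
  have "al u \<le> lam / 32 * u" unfolding al_def by (rule min.cobounded1)
  then have "2 * al u \<le> 2 * (lam / 32 * u)" by linarith
  also have "\<dots> \<le> lam / 8 * ES gv" using True lam(1) by (simp add: field_simps)
  finally show ?thesis using rho_nonneg[of xv] by simp
next
  case False
  then have "u / 2 \<le> Wf xv" using assms by simp
  then have "rhot (u / 2) \<le> rho xv" by (rule rhot_le)
  then have "2 * al u \<le> 2 * rho xv" unfolding al_def by simp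
  then show ?thesis using ES_nonneg[of gv] lam(1) by (smt (verit) mult_nonneg_nonneg divide_nonneg_pos)
qed

lemma traj_bound:
  assumes sol: "seeking_solution c f A (\<lambda>a. \<delta> * dbar a) x w"
    and d: "0 < \<delta>" "\<delta> \<le> d1" "C * \<delta> \<le> al \<eta>"
    and KB: "\<forall>\<delta> xv gv. 0 < \<delta> \<longrightarrow> \<delta> \<le> d1 \<longrightarrow> invS xv gv \<longrightarrow> Wf xv \<le> Rr \<longrightarrow>
     UdS xv \<delta> gv \<le> - \<delta> * (lam / 8 * ES gv + 2 * rho xv) + C * \<delta>\<^sup>2"
    and eta: "0 < \<eta>" "\<eta> < Rr" and U0: "Ut x w 0 < Rr"
    and t: "t \<ge> 0"
  shows "Ut x w t \<le> \<eta> + psi al (Ut x w 0) (\<delta> * t)"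
proof -
  interpret al: alpha_fun al by (rule al_fun)
  define U where "U = Ut x w"
  define U' where "U' s = UdS (x s) \<delta> (gt x w s)" for s
  have der: "\<forall>s\<ge>0. (U has_real_derivative U' s) (at s within {0..})"
    unfolding U_def U'_def using Uder[OF sol] by blast
  have key: "U' s \<le> - \<delta> * al \<theta>" if s: "s \<ge> 0" and th: "\<eta> \<le> \<theta>" "\<theta> \<le> U s" and UR: "U s \<le> Rr" for s \<theta>
  proof -
    have iv: "invS (x s) (gt x w s)" by (rule inv[OF sol s])
    have Ueq: "U s = ES (gt x w s) + Wf (x s)" unfolding U_def by (rule Ut_def[OF sol])
    have WR: "Wf (x s) \<le> Rr" using Ueq UR ES_nonneg[of "gt x w s"] by linarith
    have "U' s \<le> - \<delta> * (lam / 8 * ES (gt x w s) + 2 * rho (x s)) + C * \<delta>\<^sup>2"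
      unfolding U'_def using KB d iv WR by blast
    moreover have "2 * al (U s) \<le> lam / 8 * ES (gt x w s) + 2 * rho (x s)"
      by (rule al_bound[OF iv Ueq]) (use th eta in linarith)
    moreover have "al \<theta> \<le> al (U s)" by (rule al.amono) (use th eta in linarith)+
    moreover have "al \<eta> \<le> al \<theta>" by (rule al.amono) (use th eta in linarith)+
    moreover have "C * \<delta>\<^sup>2 \<le> al \<eta> * \<delta>"
    proof -
      have "(C * \<delta>) * \<delta> \<le> al \<eta> * \<delta>" using d(3) d(1) by (intro mult_right_mono) auto
      then show ?thesis by (simp add: power2_eq_square mult.assoc)
    qed
    ultimately have "U' s \<le> - \<delta> * (2 * al \<theta>) + al \<theta> * \<delta>"
    proof -
      assume a: "U' s \<le> - \<delta> * (lam / 8 * ES (gt x w s) + 2 * rho (x s)) + C * \<delta>\<^sup>2"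
        "2 * al (U s) \<le> lam / 8 * ES (gt x w s) + 2 * rho (x s)" "al \<theta> \<le> al (U s)" "al \<eta> \<le> al \<theta>"
        "C * \<delta>\<^sup>2 \<le> al \<eta> * \<delta>"
      have "\<delta> * (2 * al \<theta>) \<le> \<delta> * (lam / 8 * ES (gt x w s) + 2 * rho (x s))"
        using a(2,3) d(1) by (intro mult_left_mono) auto
      moreover have "al \<eta> * \<delta> \<le> al \<theta> * \<delta>" using a(4) d(1) by (intro mult_right_mono) auto
      ultimately show ?thesis using a(1,5) by linarith
    qed
    then show ?thesis by (simp add: algebra_simps)
  qed
  define m where "m = max (U 0) \<eta>"
  have mR: "m < Rr" unfolding m_def U_def using U0 eta by simp
  have bnd: "U s \<le> m" if s: "s \<ge> 0" for s
  proof (rule barrier[of 0 s U U' m Rr])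
    show "0 \<le> s" by (rule s)
    show "\<forall>r\<in>{0..s}. (U has_real_derivative U' r) (at r within {0..s})"
      using der_sub[OF der] by auto
    show "U 0 \<le> m" unfolding m_def by simp
    show "m < Rr" by (rule mR)
    show "\<forall>r\<in>{0..s}. m \<le> U r \<and> U r \<le> Rr \<longrightarrow> U' r \<le> 0"
    proof (intro ballI impI)
      fix r assume r: "r \<in> {0..s}" "m \<le> U r \<and> U r \<le> Rr"
      have em: "\<eta> \<le> m" unfolding m_def by simp
      have r0: "r \<ge> 0" using r(1) by simp
      have "U' r \<le> - \<delta> * al m" using key[OF r0 em] r(2) by blast
      moreover have "al m > 0" using al.apos[of m] eta em by simp
      then have "\<delta> * al m > 0" using d(1) by simp
      ultimately show "U' r \<le> 0" by linarith
    qed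
  qed
  have dec: "U t \<le> max \<theta> (U 0 - al \<theta> * (\<delta> * t))" if th: "\<theta> \<ge> \<eta>" for \<theta>
  proof (cases "\<theta> < Rr")
    case False
    then show ?thesis using bnd[OF t] mR by simp
  next
    case True
    have "U t \<le> max \<theta> (U 0 - (\<delta> * al \<theta>) * t)"
    proof (rule decay[of U U' Rr \<theta> "\<delta> * al \<theta>" t])
      show "\<forall>t\<ge>0. (U has_real_derivative U' t) (at t within {0..})" by (rule der)
      show "\<forall>t\<ge>0. U t \<le> Rr" using bnd mR by (meson less_imp_le order_trans)
      show "\<theta> < Rr" by (rule True)
      show "0 \<le> \<delta> * al \<theta>" using d(1) al.apos[of \<theta>] th eta by simp
      show "\<forall>s\<ge>0. \<theta> \<le> U s \<longrightarrow> U' s \<le> - (\<delta> * al \<theta>)"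
      proof (intro allI impI)
        fix s :: real assume s: "s \<ge> 0" "\<theta> \<le> U s"
        have "U s \<le> Rr" using bnd[OF s(1)] mR by simp
        then show "U' s \<le> - (\<delta> * al \<theta>)" using key[OF s(1) th s(2)] by simp
      qed
      show "0 \<le> t" by (rule t)
    qed
    then show ?thesis by (simp add: mult.commute mult.left_commute)
  qed
  have "U t \<le> \<eta> + psi al (U 0) (\<delta> * t)"
    by (rule al.psi_bound[OF eta(1)]) (use d t dec in auto)
  then show ?thesis unfolding U_def .
qed

lemma main_game:
  "\<exists>\<phi>. classKL \<phi> \<and>
    (\<forall>\<Delta>>0. \<forall>v>0. \<exists>\<delta>s>0. \<forall>\<delta>. 0 < \<delta> \<and> \<delta> < \<delta>s \<longrightarrow>
      (\<forall>x w. seeking_solution c f A (\<lambda>a. \<delta> * dbar a) x w \<and>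
             chi_norm c f R xs (x 0) (\<lambda>j k. w j k 0) < \<Delta> \<longrightarrow>
        (\<forall>t\<ge>0. chi_norm c f R xs (x t) (\<lambda>j k. w j k t)
                 \<le> \<phi> (chi_norm c f R xs (x 0) (\<lambda>j k. w j k 0)) (\<delta> * t) + v)))"
proof -
  interpret al: alpha_fun al by (rule al_fun)
  define c1 where "c1 = min 1 ommin"
  have c1: "c1 > 0" "c1 \<le> 1" "c1 \<le> ommin" unfolding c1_def using ommin_pos by auto
  define Lc where "Lc = max 1 ommax"
  have Lc: "Lc \<ge> 1" "ommax \<le> Lc" unfolding Lc_def by auto
  define \<phi> where "\<phi> = al.phiKL (1 / c1) Lc"
  have KL: "classKL \<phi>" unfolding \<phi>_def by (rule al.phiKL_classKL) (use c1 Lc in auto)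
  show ?thesis
  proof (rule exI[of _ \<phi>], rule conjI[OF KL], intro allI impI)
    fix \<Delta> v :: real assume \<Delta>: "\<Delta> > 0" and v: "v > 0"
    define Rr where "Rr = Lc * \<Delta>\<^sup>2 + 1"
    obtain C d1 where C: "C > 0" and d1: "d1 > 0" and KB: "\<forall>\<delta> xv gv. 0 < \<delta> \<longrightarrow> \<delta> \<le> d1 \<longrightarrow> invS xv gv \<longrightarrow> Wf xv \<le> Rr \<longrightarrow>
     UdS xv \<delta> gv \<le> - \<delta> * (lam / 8 * ES gv + 2 * rho xv) + C * \<delta>\<^sup>2"
      using key_bound[of Rr] by blast
    define \<eta> where "\<eta> = min (1/2) (c1 * v\<^sup>2)"
    have cv: "c1 * v\<^sup>2 > 0" using c1 v by simp
    have LD: "Lc * \<Delta>\<^sup>2 \<ge> 0" using Lc by simp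
    have eta: "\<eta> > 0" "\<eta> < Rr" "\<eta> \<le> c1 * v\<^sup>2"
    proof -
      show "\<eta> > 0" unfolding \<eta>_def using cv by simp
      have "\<eta> \<le> 1/2" unfolding \<eta>_def by simp
      then show "\<eta> < Rr" unfolding Rr_def using LD by linarith
      show "\<eta> \<le> c1 * v\<^sup>2" unfolding \<eta>_def by simp
    qed
    define \<delta>s where "\<delta>s = min d1 (al \<eta> / C)"
    have ds: "\<delta>s > 0" unfolding \<delta>s_def using d1 C al.apos[OF eta(1)] by simp
    show "\<exists>\<delta>s>0. \<forall>\<delta>. 0 < \<delta> \<and> \<delta> < \<delta>s \<longrightarrow>
      (\<forall>x w. seeking_solution c f A (\<lambda>a. \<delta> * dbar a) x w \<and>
             chi_norm c f R xs (x 0) (\<lambda>j k. w j k 0) < \<Delta> \<longrightarrow>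
        (\<forall>t\<ge>0. chi_norm c f R xs (x t) (\<lambda>j k. w j k t)
                 \<le> \<phi> (chi_norm c f R xs (x 0) (\<lambda>j k. w j k 0)) (\<delta> * t) + v))"
    proof (rule exI[of _ \<delta>s], rule conjI[OF ds], intro allI impI, elim conjE)
      fix \<delta> x w and t :: real
      assume d: "0 < \<delta>" "\<delta> < \<delta>s" and sol: "seeking_solution c f A (\<lambda>a. \<delta> * dbar a) x w"
        and ch0: "chi_norm c f R xs (x 0) (\<lambda>j k. w j k 0) < \<Delta>" and t: "0 \<le> t"
      define Q where "Q s = ES (gt x w s) + (norm (x s - xs))\<^sup>2" for s
      have chiQ: "chi_norm c f R xs (x s) (\<lambda>j k. w j k s) = sqrt (Q s)" for s
        unfolding chi_sq Q_def gt_def[OF sol] by simp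
      have Q0: "Q s \<ge> 0" for s unfolding Q_def using ES_nonneg by (simp add: add_nonneg_nonneg)
      have Ueq: "Ut x w s = ES (gt x w s) + Wf (x s)" for s by (rule Ut_def[OF sol])
      have Ulow: "c1 * Q s \<le> Ut x w s" for s
      proof -
        have "c1 * ES (gt x w s) \<le> ES (gt x w s)" using c1 ES_nonneg by (simp add: mult_left_le_one_le)
        moreover have "c1 * (norm (x s - xs))\<^sup>2 \<le> Wf (x s)"
          using Wf_lower[of "x s"] c1 by (meson mult_right_mono order_trans zero_le_power2)
        ultimately show ?thesis unfolding Ueq Q_def by (simp add: distrib_left)
      qed
      have Uup: "Ut x w s \<le> Lc * Q s" for s
      proof -
        have "1 * ES (gt x w s) \<le> Lc * ES (gt x w s)" using Lc ES_nonneg[of "gt x w s"] by (intro mult_right_mono) auto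
        then have "ES (gt x w s) \<le> Lc * ES (gt x w s)" by simp
        moreover have "Wf (x s) \<le> Lc * (norm (x s - xs))\<^sup>2"
          using Wf_upper[of "x s"] Lc by (meson mult_right_mono order_trans zero_le_power2)
        ultimately show ?thesis unfolding Ueq Q_def by (simp add: distrib_left)
      qed
      define r0 where "r0 = chi_norm c f R xs (x 0) (\<lambda>j k. w j k 0)"
      have r0: "r0 \<ge> 0" "r0\<^sup>2 = Q 0" unfolding r0_def chiQ using Q0 by auto
      have "r0\<^sup>2 < \<Delta>\<^sup>2" using ch0 r0(1) unfolding r0_def[symmetric] by (simp add: power_strict_mono)
      then have "Lc * r0\<^sup>2 \<le> Lc * \<Delta>\<^sup>2" using Lc by (intro mult_left_mono) auto
      then have U0: "Ut x w 0 \<le> Lc * r0\<^sup>2" "Ut x w 0 < Rr"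
        using Uup[of 0] r0 unfolding Rr_def by auto
      have dd: "\<delta> \<le> d1" "C * \<delta> \<le> al \<eta>"
        using d C unfolding \<delta>s_def by (auto simp: field_simps)
      have Ut_b: "Ut x w t \<le> \<eta> + psi al (Ut x w 0) (\<delta> * t)"
        by (rule traj_bound[OF sol d(1) dd KB eta(1,2) U0(2) t])
      have "psi al (Ut x w 0) (\<delta> * t) \<le> psi al (Lc * r0\<^sup>2) (\<delta> * t)"
        by (rule al.psi_mono_r[OF U0(1)])
      then have "c1 * Q t \<le> \<eta> + psi al (Lc * r0\<^sup>2) (\<delta> * t)" using Ulow[of t] Ut_b by linarith
      then have Qt: "Q t \<le> \<eta> / c1 + (1 / c1) * psi al (Lc * r0\<^sup>2) (\<delta> * t)"
        using c1 by (simp add: field_simps)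
      have ps0: "0 \<le> (1 / c1) * psi al (Lc * r0\<^sup>2) (\<delta> * t)" using c1 al.psi_nonneg by simp
      have "sqrt (Q t) \<le> sqrt (\<eta> / c1 + (1 / c1) * psi al (Lc * r0\<^sup>2) (\<delta> * t))"
        using Qt by (rule real_sqrt_le_mono)
      also have "\<dots> \<le> sqrt (\<eta> / c1) + sqrt ((1 / c1) * psi al (Lc * r0\<^sup>2) (\<delta> * t))"
        by (rule sqrt_add_le_add_sqrt) (use eta c1 ps0 in auto)
      also have "sqrt (\<eta> / c1) \<le> v"
      proof -
        have "\<eta> / c1 \<le> v\<^sup>2" using eta(3) c1 by (simp add: field_simps)
        then have "sqrt (\<eta> / c1) \<le> sqrt (v\<^sup>2)" by (rule real_sqrt_le_mono)
        then show ?thesis using v by simp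
      qed
      also have "sqrt ((1 / c1) * psi al (Lc * r0\<^sup>2) (\<delta> * t)) \<le> \<phi> r0 (\<delta> * t)"
        unfolding \<phi>_def al.phiKL_def using r0(1) by simp
      finally show "chi_norm c f R xs (x t) (\<lambda>j k. w j k t) \<le> \<phi> (chi_norm c f R xs (x 0) (\<lambda>j k. w j k 0)) (\<delta> * t) + v"
        unfolding chiQ[of t] r0_def[symmetric] by simp
    qed
  qed
qed

end

theorem theorem1:
  fixes c :: "'a::finite \<Rightarrow> 'b::finite"
    and f :: "'a \<Rightarrow> real^'a \<Rightarrow> real"
    and A :: "'a \<Rightarrow> 'a \<Rightarrow> real"
    and dbar :: "'a \<Rightarrow> real"
    and xs :: "real^'a"
    and R :: "'a \<Rightarrow> 'a \<Rightarrow> nat \<Rightarrow> real"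
  assumes N2: "CARD('b) \<ge> 2"
    and m2: "\<forall>i. card {a. c a = i} \<ge> 2"
    and A1: "\<forall>a. C2 (f a)"
    and A2: "strictly_monotone (pseudo_gradient c f)"
    and NE: "nash_eq c f xs"
    and GI: "\<forall>i. graph_connected {a. c a = i} (interferes c f)"
    and GC: "\<forall>k. graph_connected (cvert c f k) (\<lambda>j l. A j l > 0)"
    and Asym: "\<forall>j l. c j = c l \<longrightarrow> A j l = A l j"
    and Anonneg: "\<forall>j l. c j = c l \<longrightarrow> A j l \<ge> 0"
    and Adiag: "\<forall>j. A j j = 0"
    and dpos: "\<forall>a. dbar a > 0"
    and R: "orth_compl c f R"
  shows "\<exists>\<phi>. classKL \<phi> \<and>
    (\<forall>\<Delta>>0. \<forall>v>0. \<exists>\<delta>s>0. \<forall>\<delta>. 0 < \<delta> \<and> \<delta> < \<delta>s \<longrightarrow>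
      (\<forall>x w. seeking_solution c f A (\<lambda>a. \<delta> * dbar a) x w \<and>
             chi_norm c f R xs (x 0) (\<lambda>j k. w j k 0) < \<Delta> \<longrightarrow>
        (\<forall>t\<ge>0. chi_norm c f R xs (x t) (\<lambda>j k. w j k t)
                 \<le> \<phi> (chi_norm c f R xs (x 0) (\<lambda>j k. w j k 0)) (\<delta> * t) + v)))"
proof -
  interpret game c f A dbar xs R
    using A1 A2 NE GC Asym Anonneg dpos R by unfold_locales
  show ?thesis by (rule main_game)
qed

end
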